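(* For every $d$ with $0\le d\le\rho(m)-1$ and every integer $t$ with $0\le t\le \rho(m)(k-1-p_d)+d$, we have $z(L_1(d)+h+t,\,d)=w(h+t,\,d)$.
   Context: For $u\in\mathbb{R}$ let $\mathbf 1[u]=1$ if $u\ge 0$ and $\mathbf 1[u]=0$ if $u<0$. Let $m$ be a positive integer and let $\rho(m)$ denote the number of primes $p$ with $2m<p<3m$; assume $\rho(m)\ge 2$. List these primes as $p_0>p_1>\dots>p_{\rho(m)-1}$ and put $\alpha_i=3m-p_i$. Let $k=(6m-1)\rho(m)$, $\mu_i=\lfloor k/p_i\rfloor$, $\beta_i=k-p_i\mu_i$. Define weights $\bar a_j$, $1\le j\le k$: if $\rho(m)$ is even, $\bar a_j=2$ if $j=\ell p_i$ for some $i$ and some $\ell$ with $1\le \ell\le 3\rho(m)/2$, $\bar a_j=-2$ if $j=\ell p_i$ with $3\rho(m)/2<\ell\le 2\rho(m)$, and $\bar a_j=0$ otherwise; if $\rho(m)$ is odd, $\bar a_j=2$ if $j=\ell p_i$ with $1\le\ell\le (3\rho(m)-1)/2$, $\bar a_j=-2$ if $j=\ell p_i$ with $(3\rho(m)+1)/2\le \ell\le 2\rho(m)-2$, $\bar a_j=-1$ if $j=\ell p_i$ with $\ell\in\{2\rho(m)-1,2\rho(m)\}$, and $\bar a_j=0$ otherwise (well defined since the sets $\{\ell p_i:1\le\ell\le2\rho(m)\}$ are pairwise disjoint). Let $\bar\theta=2\rho(m)$. For each $i$ define $x^{\alpha_i}(t)$ for $0\le t\le k-1$ by $x^{\alpha_i}(t)=1$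 if $t=\beta_i+\ell p_i$ for some $0\le \ell\le\mu_i-1$ and $x^{\alpha_i}(t)=0$ otherwise, and for $t\ge k$ by $x^{\alpha_i}(t)=\mathbf 1\big[\sum_{j=1}^k \bar a_j x^{\alpha_i}(t-j)-\bar\theta\big]$. Let $h=\rho(m)k$. For $1\le f\le h$ let $b_f=\bar a_j$ if $f=\rho(m)j$ with $1\le j\le k$, and $b_f=0$ otherwise. Define $(y(n))_{n\ge0}$ by $y(\rho(m)j+i)=x^{\alpha_i}(1+j)$ for $0\le j\le k-1$, $0\le i\le\rho(m)-1$, and $y(n)=\mathbf 1\big[\sum_{f=1}^h b_f y(n-f)-\bar\theta\big]$ for $n\ge h$. Let $L_1(d)=\rho(m)\cdot\mathrm{lcm}(p_0,\dots,p_d)$ for $0\le d\le\rho(m)-1$. For $0\le d\le\rho(m)-1$ define $(w(n,d))_{n\ge0}$ by: for $0\le i\le d$, $w(\rho(m)j+i,d)=x^{\alpha_i}(1+j)$ for $0\le j\le k-2$ and $w(\rho(m)(k-1)+i,d)=1-x^{\alpha_i}(k)$; for $d+1\le i\le\rho(m)-1$ and $0\le j\le k-1$, $w(\rho(m)j+i,d)=y(\rho(m)j+i+L_1(d))$; and $w(n,d)=\mathbf 1\big[\sum_{f=1}^h b_f w(n-f,d)-\bar\theta\big]$ for $n\ge h$. For $0\le d\le\rho(m)-1$ let $B_0(d)=\{f\in\mathbb Z:\ 1\le f\le h-d,\ y(h+L_1(d)-\rho(m)-f)=1\}$, $B_{\ell+1}(d)=\{1+f: f\in B_\ell(d)\}$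 for $\ell\ge0$, $A(d)=\bigcup_{\ell=0}^{d}B_\ell(d)$, and $Tot(d)=|B_0(d)|$. Fix a real number $\lambda$ with $-1\le\lambda<0$. Put $\beta(d)=\lambda/Tot(d)$, $\xi(d)=\lambda-\beta(d)/8$, $\theta_2(d)=\bar\theta+\xi(d)$, and for $1\le f\le h$ let $c(f,d)=b_f+\beta(d)$ if $f\in A(d)$ and $c(f,d)=b_f$ otherwise. Define $(z(n,d))_{n\ge0}$ by $z(n,d)=y(n)$ for $0\le n\le h-1$ and $z(n,d)=\mathbf 1\big[\sum_{f=1}^h c(f,d)\,z(n-f,d)-\theta_2(d)\big]$ for $n\ge h$. *)

theory Defs
  imports Complex_Main "HOL-Computational_Algebra.Primes"
begin

definition step :: "real \<Rightarrow> real" where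
  "step u = (if u \<ge> 0 then 1 else 0)"

function thr_seq :: "(nat \<Rightarrow> real) \<Rightarrow> nat \<Rightarrow> (nat \<Rightarrow> real) \<Rightarrow> real \<Rightarrow> nat \<Rightarrow> real" where
  "thr_seq a H init th n =
     (if n < H then init n
      else step ((\<Sum>f = 1..H. a f * thr_seq a H init th (n - f)) - th))"
  by pat_completeness auto
termination
  by (relation "measure (\<lambda>(a, H, init, th, n). n)") auto

definition prime_set :: "nat \<Rightarrow> nat set" where
  "prime_set m = {p. prime p \<and> 2 * m < p \<and> p < 3 * m}"

definition rho :: "nat \<Rightarrow> nat" where
  "rho m = card (prime_set m)"

definition pr :: "nat \<Rightarrow> nat \<Rightarrow> nat" where
  "pr m i = rev (sorted_list_of_set (prime_set m)) ! i"

definition alpha :: "nat \<Rightarrow> nat \<Rightarrow> nat" where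
  "alpha m i = 3 * m - pr m i"

definition kk :: "nat \<Rightarrow> nat" where
  "kk m = (6 * m - 1) * rho m"

definition mu :: "nat \<Rightarrow> nat \<Rightarrow> nat" where
  "mu m i = kk m div pr m i"

definition beta :: "nat \<Rightarrow> nat \<Rightarrow> nat" where
  "beta m i = kk m - pr m i * mu m i"

definition abar :: "nat \<Rightarrow> nat \<Rightarrow> real" where
  "abar m j =
    (let r = rho m in
     if even r then
       (if \<exists>i<r. \<exists>l. 1 \<le> l \<and> l \<le> 3 * r div 2 \<and> j = l * pr m i then 2
        else if \<exists>i<r. \<exists>l. 3 * r div 2 < l \<and> l \<le> 2 * r \<and> j = l * pr m i then -2
        else 0)
     else
       (if \<exists>i<r. \<exists>l. 1 \<le> l \<and> l \<le> (3 * r - 1) div 2 \<and> j = l * pr m i then 2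
        else if \<exists>i<r. \<exists>l. (3 * r + 1) div 2 \<le> l \<and> l \<le> 2 * r - 2 \<and> j = l * pr m i then -2
        else if \<exists>i<r. \<exists>l. (l = 2 * r - 1 \<or> l = 2 * r) \<and> j = l * pr m i then -1
        else 0))"

definition thetabar :: "nat \<Rightarrow> real" where
  "thetabar m = 2 * real (rho m)"

text \<open>x^{alpha_i}(t), indexed by i.\<close>
definition xs :: "nat \<Rightarrow> nat \<Rightarrow> nat \<Rightarrow> real" where
  "xs m i = thr_seq (abar m) (kk m)
      (\<lambda>t. if \<exists>l. l < mu m i \<and> t = beta m i + l * pr m i then 1 else 0)
      (thetabar m)"

definition hh :: "nat \<Rightarrow> nat" where
  "hh m = rho m * kk m"

definition bb :: "nat \<Rightarrow> nat \<Rightarrow> real" where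
  "bb m f = (if \<exists>j. 1 \<le> j \<and> j \<le> kk m \<and> f = rho m * j then abar m (f div rho m) else 0)"

definition ys :: "nat \<Rightarrow> nat \<Rightarrow> real" where
  "ys m = thr_seq (bb m) (hh m)
      (\<lambda>n. xs m (n mod rho m) (1 + n div rho m))
      (thetabar m)"

definition L1 :: "nat \<Rightarrow> nat \<Rightarrow> nat" where
  "L1 m d = rho m * Lcm (pr m ` {0..d})"

definition ws :: "nat \<Rightarrow> nat \<Rightarrow> nat \<Rightarrow> real" where
  "ws m d = thr_seq (bb m) (hh m)
      (\<lambda>n. let i = n mod rho m; j = n div rho m in
           if i \<le> d then (if j \<le> kk m - 2 then xs m i (1 + j) else 1 - xs m i (kk m))
           else ys m (n + L1 m d))
      (thetabar m)"

definition B0 :: "nat \<Rightarrow> nat \<Rightarrow> nat set" where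
  "B0 m d = {f. 1 \<le> f \<and> f \<le> hh m - d \<and> ys m (hh m + L1 m d - rho m - f) = 1}"

definition Bl :: "nat \<Rightarrow> nat \<Rightarrow> nat \<Rightarrow> nat set" where
  "Bl m d l = (\<lambda>f. l + f) ` B0 m d"

definition AA :: "nat \<Rightarrow> nat \<Rightarrow> nat set" where
  "AA m d = (\<Union>l\<in>{0..d}. Bl m d l)"

definition Tot :: "nat \<Rightarrow> nat \<Rightarrow> nat" where
  "Tot m d = card (B0 m d)"

definition betad :: "real \<Rightarrow> nat \<Rightarrow> nat \<Rightarrow> real" where
  "betad lam m d = lam / real (Tot m d)"

definition xi :: "real \<Rightarrow> nat \<Rightarrow> nat \<Rightarrow> real" where
  "xi lam m d = lam - betad lam m d / 8"

definition theta2 :: "real \<Rightarrow> nat \<Rightarrow> nat \<Rightarrow> real" where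
  "theta2 lam m d = thetabar m + xi lam m d"

definition cc :: "real \<Rightarrow> nat \<Rightarrow> nat \<Rightarrow> nat \<Rightarrow> real" where
  "cc lam m d f = (if f \<in> AA m d then bb m f + betad lam m d else bb m f)"

definition zs :: "real \<Rightarrow> nat \<Rightarrow> nat \<Rightarrow> nat \<Rightarrow> real" where
  "zs lam m d = thr_seq (cc lam m d) (hh m) (ys m) (theta2 lam m d)"

end

theory Submission
  imports Defs
begin

declare thr_seq.simps[simp del]

lemma thr_seq_eq:
  assumes "\<And>n. n < H \<Longrightarrow> init n = F n"
    and "\<And>n. H \<le> n \<Longrightarrow> step ((\<Sum>f = 1..H. a f * F (n - f)) - th) = F n"
  shows "thr_seq a H init th n = F n"
proof (induction n rule: less_induct)
  case (less n)
  show ?case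
  proof (cases "n < H")
    case True
    then show ?thesis using assms(1) by (simp add: thr_seq.simps[of a H init th n])
  next
    case False
    have "(\<Sum>f = 1..H. a f * thr_seq a H init th (n - f)) = (\<Sum>f = 1..H. a f * F (n - f))"
      by (rule sum.cong) (use False less in auto)
    then show ?thesis using False assms(2)[of n] by (simp add: thr_seq.simps[of a H init th n])
  qed
qed

definition g :: "nat \<Rightarrow> nat \<Rightarrow> real" where
  "g r l = (if even r then (if l \<le> 3*r div 2 then 2 else -2)
     else (if l \<le> (3*r-1) div 2 then 2 else if l \<le> 2*r-2 then -2 else -1))"

lemma psum_even:
  assumes "r = 2*s" "q \<le> 4*s"
  shows "(\<Sum>l=1..q. g r l) = (if q \<le> 3*s then 2*real q else 12*real s - 2*real q)"
  using assms(2)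
proof (induction q)
  case 0 then show ?case by simp
next
  case (Suc q)
  then have IH: "(\<Sum>l=1..q. g r l) = (if q \<le> 3*s then 2*real q else 12*real s - 2*real q)" by simp
  have "(\<Sum>l=1..Suc q. g r l) = (\<Sum>l=1..q. g r l) + g r (Suc q)" by (simp add: sum.cl_ivl_Suc)
  moreover have "g r (Suc q) = (if Suc q \<le> 3*s then 2 else -2)" using assms(1) by (simp add: g_def)
  ultimately show ?case using IH by (auto split: if_splits)
qed

lemma psum_odd:
  assumes "r = 2*s+1" "q \<le> 4*s+2" "s \<ge> 1"
  shows "(\<Sum>l=1..q. g r l) = (if q \<le> 3*s+1 then 2*real q else if q \<le> 4*s then 12*real s + 4 - 2*real q
      else if q = 4*s+1 then 4*real s + 3 else 4*real s + 2)"
  using assms(2)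
proof (induction q)
  case 0 then show ?case by simp
next
  case (Suc q)
  then have IH: "(\<Sum>l=1..q. g r l) = (if q \<le> 3*s+1 then 2*real q else if q \<le> 4*s then 12*real s + 4 - 2*real q
      else if q = 4*s+1 then 4*real s + 3 else 4*real s + 2)" by simp
  have "(\<Sum>l=1..Suc q. g r l) = (\<Sum>l=1..q. g r l) + g r (Suc q)" by (simp add: sum.cl_ivl_Suc)
  moreover have "(3*r - 1) div 2 = 3*s+1" "2*r-2 = 4*s" using assms(1) by auto
  then have "g r (Suc q) = (if Suc q \<le> 3*s+1 then 2 else if Suc q \<le> 4*s then -2 else -1)"
    using assms(1) by (simp add: g_def)
  ultimately show ?case using IH Suc.prems assms(3) by (auto split: if_splits)
qed

lemma psum_props:
  assumes "r \<ge> 2"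
  shows "(\<Sum>l=1..2*r. g r l) = 2*real r" and "1 \<le> q \<Longrightarrow> q \<le> 2*r \<Longrightarrow> (\<Sum>l=1..q. g r l) \<ge> 2"
proof -
  have "((\<Sum>l=1..2*r. g r l) = 2*real r) \<and> (1 \<le> q \<longrightarrow> q \<le> 2*r \<longrightarrow> (\<Sum>l=1..q. g r l) \<ge> 2)"
  proof (cases "even r")
    case True
    then obtain s where s: "r = 2*s" by blast
    show ?thesis using psum_even[OF s, of "2*r"] psum_even[OF s, of q] s by auto
  next
    case False
    then obtain s where s: "r = 2*s+1" by (metis oddE)
    then have "s \<ge> 1" using assms by simp
    show ?thesis using psum_odd[OF s _ \<open>s\<ge>1\<close>, of "2*r"] psum_odd[OF s _ \<open>s\<ge>1\<close>, of q] s by auto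
  qed
  then show "(\<Sum>l=1..2*r. g r l) = 2*real r" and "1 \<le> q \<Longrightarrow> q \<le> 2*r \<Longrightarrow> (\<Sum>l=1..q. g r l) \<ge> 2"
    by auto
qed

lemma g_le2: "g r l \<le> 2" by (simp add: g_def)

lemma tail_le:
  assumes "r \<ge> 2" "1 \<le> q"
  shows "(\<Sum>l=1..2*r. if q < l then g r l else 0) \<le> 2*real r - 1"
proof (cases "q \<le> 2*r")
  case True
  have split: "(\<Sum>l=1..2*r. g r l) = (\<Sum>l=1..2*r. if q < l then g r l else 0) + (\<Sum>l=1..2*r. if l \<le> q then g r l else 0)"
    by (subst sum.distrib[symmetric]) (rule sum.cong, auto)
  have "(\<Sum>l=1..2*r. if l \<le> q then g r l else 0) = (\<Sum>l\<in>{l\<in>{1..2*r}. l \<le> q}. g r l)"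
    using sum.inter_filter[of "{1..2*r}" "g r" "\<lambda>l. l \<le> q"] by simp
  also have "{l\<in>{1..2*r}. l \<le> q} = {1..q}" using True by auto
  finally show ?thesis using split psum_props(1)[OF assms(1)] psum_props(2)[OF assms(1) assms(2) True] by linarith
next
  case False
  then have "(\<Sum>l=1..2*r. if q < l then g r l else 0) = 0" by (intro sum.neutral) auto
  then show ?thesis using assms by simp
qed

locale L20 =
  fixes m :: nat
  assumes m_pos: "m > 0" and r2: "rho m \<ge> 2"
begin

abbreviation "r \<equiv> rho m"
abbreviation "k \<equiv> kk m"
abbreviation "p \<equiv> pr m"
abbreviation "h \<equiv> hh m"

lemma fin_ps: "finite (prime_set m)"
  by (rule finite_subset[of _ "{..<3*m}"]) (auto simp: prime_set_def)

lemma len_list: "length (rev (sorted_list_of_set (prime_set m))) = r"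
  by (simp add: rho_def fin_ps)

lemma p_in: "i < r \<Longrightarrow> p i \<in> prime_set m"
proof -
  assume "i < r"
  then have "rev (sorted_list_of_set (prime_set m)) ! i \<in> set (rev (sorted_list_of_set (prime_set m)))"
    using len_list by (intro nth_mem) simp
  then show ?thesis by (simp add: pr_def fin_ps)
qed

lemma p_prime: "i < r \<Longrightarrow> prime (p i)" using p_in by (simp add: prime_set_def)
lemma p_gt: "i < r \<Longrightarrow> 2*m < p i" using p_in by (simp add: prime_set_def)
lemma p_lt: "i < r \<Longrightarrow> p i < 3*m" using p_in by (simp add: prime_set_def)

lemma p_inj: "i < r \<Longrightarrow> j < r \<Longrightarrow> p i = p j \<Longrightarrow> i = j"
  using nth_eq_iff_index_eq[of "rev (sorted_list_of_set (prime_set m))" i j] len_list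
  by (simp add: pr_def)

lemma r_le: "2 * r \<le> m"
proof -
  have "prime_set m \<subseteq> (\<lambda>j. 2*j+1) ` {m..<3*m div 2}"
  proof
    fix q assume q: "q \<in> prime_set m"
    then have "prime q" "2*m < q" "q < 3*m" by (auto simp: prime_set_def)
    then have "odd q" using m_pos by (intro prime_odd_nat) auto
    then have "q = 2*(q div 2)+1" by presburger
    moreover have "q div 2 \<in> {m..<3*m div 2}" using \<open>2*m<q\<close> \<open>q<3*m\<close> \<open>odd q\<close> by auto presburger+
    ultimately show "q \<in> (\<lambda>j. 2*j+1) ` {m..<3*m div 2}" by blast
  qed
  then have "r \<le> card ((\<lambda>j. 2*j+1) ` {m..<3*m div 2})"
    unfolding rho_def by (intro card_mono) auto
  also have "\<dots> \<le> card {m..<3*m div 2}" by (rule card_image_le) simp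
  also have "\<dots> = 3*m div 2 - m" by simp
  finally show ?thesis by linarith
qed

lemma k_eq: "k = (6*m-1)*r" by (simp add: kk_def)

lemma lp_le: "i < r \<Longrightarrow> l \<le> 2*r \<Longrightarrow> l * p i + 1 \<le> k"
proof -
  assume a: "i < r" "l \<le> 2*r"
  have "l * p i \<le> 2*r*(3*m-1)" using p_lt[OF a(1)] a(2) by (intro mult_le_mono) auto
  also have "\<dots> + 1 \<le> (6*m-1)*r"
  proof -
    obtain m' where "m = Suc m'" using m_pos not0_implies_Suc by blast
    then show ?thesis using r2 by (simp add: algebra_simps)
  qed
  finally show ?thesis using k_eq by linarith
qed

lemma pp_gt: "i < r \<Longrightarrow> j < r \<Longrightarrow> i \<noteq> j \<Longrightarrow> k < p i * p j"
proof -
  assume a: "i < r" "j < r" "i \<noteq> j"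
  have "k \<le> 6*m*r" using k_eq by simp
  also have "\<dots> \<le> 3*m*m" using r_le by simp
  also have "\<dots> < (2*m+1)*(2*m+1)" by (simp add: algebra_simps)
  also have "\<dots> \<le> p i * p j" using p_gt[OF a(1)] p_gt[OF a(2)] by (intro mult_le_mono) auto
  finally show ?thesis .
qed

lemma two_r_lt_p: "i < r \<Longrightarrow> 2*r < p i" using p_gt r_le by fastforce

lemma k_ge: "k \<ge> 2" using lp_le[of 0 1] r2 p_gt[of 0] by auto

lemma uniq:
  assumes "i < r" "i' < r" "1 \<le> l" "l \<le> 2*r" "1 \<le> l'" "l' \<le> 2*r" "l * p i = l' * p i'"
  shows "i = i' \<and> l = l'"
proof -
  have "p i dvd l' * p i'" using assms(7) by (metis dvd_triv_right)
  then have "p i dvd l' \<or> p i dvd p i'" using p_prime[OF assms(1)] prime_dvd_mult_iff by blast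
  moreover have "\<not> p i dvd l'" using two_r_lt_p[OF assms(1)] assms(5,6)
    by (metis dvd_imp_le le_trans less_le_not_le less_one not_less)
  ultimately have "p i dvd p i'" by blast
  then have "p i = p i'" using p_prime assms(1,2) primes_dvd_imp_eq by blast
  then have "i = i'" using p_inj assms(1,2) by blast
  moreover have "l = l'" using assms(7) \<open>p i = p i'\<close> p_prime[OF assms(1)]
    by (metis mult_right_cancel not_prime_0)
  ultimately show ?thesis by blast
qed

lemma abar_mult:
  assumes "i < r" "1 \<le> l" "l \<le> 2*r"
  shows "abar m (l * p i) = g r l"
proof -
  have key: "\<And>i' l'. i' < r \<Longrightarrow> 1 \<le> l' \<Longrightarrow> l' \<le> 2*r \<Longrightarrow> l * p i = l' * p i' \<Longrightarrow> l' = l"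
    using uniq assms by metis
  show ?thesis
  proof (cases "even r")
    case E: True
    show ?thesis
    proof (cases "l \<le> 3*r div 2")
      case True
      have "\<exists>i'<r. \<exists>l'. 1 \<le> l' \<and> l' \<le> 3*r div 2 \<and> l*p i = l' * p i'" using assms True by blast
      then show ?thesis using E True unfolding abar_def Let_def g_def by simp
    next
      case False
      have "\<not>(\<exists>i'<r. \<exists>l'. 1 \<le> l' \<and> l' \<le> 3*r div 2 \<and> l*p i = l' * p i')"
      proof
        assume "\<exists>i'<r. \<exists>l'. 1 \<le> l' \<and> l' \<le> 3*r div 2 \<and> l*p i = l' * p i'"
        then obtain i' l' where "i'<r" "1 \<le> l'" "l' \<le> 3*r div 2" "l*p i = l' * p i'" by blast
        then show False using key[of i' l'] False by linarith
      qed
      moreover have "\<exists>i'<r. \<exists>l'. 3*r div 2 < l' \<and> l' \<le> 2*r \<and> l*p i = l' * p i'" using assms False by (intro exI[of _ i] conjI exI[of _ l]) auto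
      ultimately show ?thesis using E False unfolding abar_def Let_def g_def by simp
    qed
  next
    case O: False
    have dv: "(3*r+1) div 2 = (3*r-1) div 2 + 1" using O r2 by presburger
    show ?thesis
    proof (cases "l \<le> (3*r-1) div 2")
      case True
      have "\<exists>i'<r. \<exists>l'. 1 \<le> l' \<and> l' \<le> (3*r-1) div 2 \<and> l*p i = l' * p i'" using assms True by blast
      then show ?thesis using O True unfolding abar_def Let_def g_def by simp
    next
      case F1: False
      have n1: "\<not>(\<exists>i'<r. \<exists>l'. 1 \<le> l' \<and> l' \<le> (3*r-1) div 2 \<and> l*p i = l' * p i')"
      proof
        assume "\<exists>i'<r. \<exists>l'. 1 \<le> l' \<and> l' \<le> (3*r-1) div 2 \<and> l*p i = l' * p i'"
        then obtain i' l' where "i'<r" "1 \<le> l'" "l' \<le> (3*r-1) div 2" "l*p i = l' * p i'" by blast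
        then show False using key[of i' l'] F1 by linarith
      qed
      show ?thesis
      proof (cases "l \<le> 2*r-2")
        case True
        have "\<exists>i'<r. \<exists>l'. (3*r+1) div 2 \<le> l' \<and> l' \<le> 2*r-2 \<and> l*p i = l' * p i'"
          using assms True F1 dv by (intro exI[of _ i] conjI exI[of _ l]) auto
        then show ?thesis using O F1 n1 True unfolding abar_def Let_def g_def by simp
      next
        case False
        have n2: "\<not>(\<exists>i'<r. \<exists>l'. (3*r+1) div 2 \<le> l' \<and> l' \<le> 2*r-2 \<and> l*p i = l' * p i')"
        proof
          assume "\<exists>i'<r. \<exists>l'. (3*r+1) div 2 \<le> l' \<and> l' \<le> 2*r-2 \<and> l*p i = l' * p i'"
          then obtain i' l' where "i'<r" "(3*r+1) div 2 \<le> l'" "l' \<le> 2*r-2" "l*p i = l' * p i'" by blast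
          then show False using key[of i' l'] False by linarith
        qed
        have "\<exists>i'<r. \<exists>l'. (l' = 2*r-1 \<or> l' = 2*r) \<and> l*p i = l' * p i'"
          using assms False by (intro exI[of _ i] conjI exI[of _ l]) auto
        then show ?thesis using O F1 n1 n2 False unfolding abar_def Let_def g_def by simp
      qed
    qed
  qed
qed

lemma abar_zero:
  assumes "\<forall>i<r. \<forall>l. 1 \<le> l \<and> l \<le> 2*r \<longrightarrow> j \<noteq> l * p i"
  shows "abar m j = 0"
proof -
  have Hx: "False" if "i < r" "1 \<le> l" "l \<le> 2*r" "j = l * p i" for i l using assms that by blast
  have d1: "3*r div 2 \<le> 2*r" "(3*r - 1) div 2 \<le> 2*r" "1 \<le> (3*r+1) div 2" "1 \<le> 3*r div 2 + 1" using r2 by auto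
  have h1: "\<not>(\<exists>i<r. \<exists>l. 1 \<le> l \<and> l \<le> 3 * r div 2 \<and> j = l * p i)"
  proof
    assume "\<exists>i<r. \<exists>l. 1 \<le> l \<and> l \<le> 3 * r div 2 \<and> j = l * p i"
    then obtain i l where "i<r" "1 \<le> l" "l \<le> 3 * r div 2" "j = l * p i" by blast
    then show False using Hx[of i l] d1 by linarith
  qed
  have h2: "\<not>(\<exists>i<r. \<exists>l. 3 * r div 2 < l \<and> l \<le> 2 * r \<and> j = l * p i)"
  proof
    assume "\<exists>i<r. \<exists>l. 3 * r div 2 < l \<and> l \<le> 2 * r \<and> j = l * p i"
    then obtain i l where "i<r" "3 * r div 2 < l" "l \<le> 2 * r" "j = l * p i" by blast
    then show False using Hx[of i l] d1 by linarith
  qed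
  have h3: "\<not>(\<exists>i<r. \<exists>l. 1 \<le> l \<and> l \<le> (3 * r - 1) div 2 \<and> j = l * p i)"
  proof
    assume "\<exists>i<r. \<exists>l. 1 \<le> l \<and> l \<le> (3 * r - 1) div 2 \<and> j = l * p i"
    then obtain i l where "i<r" "1 \<le> l" "l \<le> (3 * r - 1) div 2" "j = l * p i" by blast
    then show False using Hx[of i l] d1 by linarith
  qed
  have h4: "\<not>(\<exists>i<r. \<exists>l. (3 * r + 1) div 2 \<le> l \<and> l \<le> 2 * r - 2 \<and> j = l * p i)"
  proof
    assume "\<exists>i<r. \<exists>l. (3 * r + 1) div 2 \<le> l \<and> l \<le> 2 * r - 2 \<and> j = l * p i"
    then obtain i l where "i<r" "(3 * r + 1) div 2 \<le> l" "l \<le> 2 * r - 2" "j = l * p i" by blast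
    then show False using Hx[of i l] d1 by linarith
  qed
  have h5: "\<not>(\<exists>i<r. \<exists>l. (l = 2 * r - 1 \<or> l = 2 * r) \<and> j = l * p i)"
  proof
    assume "\<exists>i<r. \<exists>l. (l = 2 * r - 1 \<or> l = 2 * r) \<and> j = l * p i"
    then obtain i l where "i<r" "l = 2 * r - 1 \<or> l = 2 * r" "j = l * p i" by blast
    moreover have "1 \<le> l" "l \<le> 2*r" using \<open>l = 2 * r - 1 \<or> l = 2 * r\<close> r2 by auto
    ultimately show False using Hx[of i l] by blast
  qed
  show ?thesis unfolding abar_def Let_def by (simp only: h1 h2 h3 h4 h5 if_False) simp
qed

lemma sum_abar:
  "(\<Sum>j = 1..k. abar m j * \<phi> j) = (\<Sum>i<r. \<Sum>l = 1..2*r. g r l * \<phi> (l * p i))"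
proof -
  define S where "S = {..<r} \<times> {1..2*r}"
  define \<iota> where "\<iota> = (\<lambda>(i,l). l * p i)"
  have inj: "inj_on \<iota> S" unfolding inj_on_def S_def \<iota>_def using uniq by auto
  have sub: "\<iota> ` S \<subseteq> {1..k}"
  proof
    fix x assume "x \<in> \<iota> ` S"
    then obtain i l where "i < r" "1 \<le> l" "l \<le> 2*r" "x = l * p i" unfolding S_def \<iota>_def by auto
    then show "x \<in> {1..k}" using lp_le[of i l] prime_gt_0_nat[OF p_prime[of i]] by auto
  qed
  have "(\<Sum>i<r. \<Sum>l = 1..2*r. g r l * \<phi> (l * p i)) = (\<Sum>x\<in>S. g r (snd x) * \<phi> (\<iota> x))"
    unfolding S_def \<iota>_def by (simp add: sum.cartesian_product case_prod_beta)
  also have "\<dots> = (\<Sum>x\<in>S. abar m (\<iota> x) * \<phi> (\<iota> x))"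
    by (rule sum.cong) (auto simp: S_def \<iota>_def abar_mult)
  also have "\<dots> = (\<Sum>j\<in>\<iota> ` S. abar m j * \<phi> j)"
    using sum.reindex[OF inj, of "\<lambda>j. abar m j * \<phi> j"] by simp
  also have "\<dots> = (\<Sum>j = 1..k. abar m j * \<phi> j)"
  proof (rule sum.mono_neutral_left[OF _ sub])
    show "\<forall>j\<in>{1..k} - \<iota> ` S. abar m j * \<phi> j = 0"
    proof
      fix j assume j: "j \<in> {1..k} - \<iota> ` S"
      have "\<forall>i<r. \<forall>l. 1 \<le> l \<and> l \<le> 2*r \<longrightarrow> j \<noteq> l * p i"
        using j unfolding S_def \<iota>_def by force
      then show "abar m j * \<phi> j = 0" using abar_zero by simp
    qed
  qed simp
  finally show ?thesis by simp
qed

lemma sum_bb: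
  "(\<Sum>f = 1..h. bb m f * \<phi> f) = (\<Sum>j = 1..k. abar m j * \<phi> (r * j))"
proof -
  have r0: "r > 0" using r2 by simp
  have inj: "inj_on (\<lambda>j. r*j) {1..k}" using r0 by (auto simp: inj_on_def)
  have sub: "(\<lambda>j. r*j) ` {1..k} \<subseteq> {1..h}" using r0 by (auto simp: hh_def)
  have "(\<Sum>j = 1..k. abar m j * \<phi> (r * j)) = (\<Sum>j = 1..k. bb m (r*j) * \<phi> (r * j))"
    by (rule sum.cong) (use r0 in \<open>auto simp: bb_def\<close>)
  also have "\<dots> = (\<Sum>f\<in>(\<lambda>j. r*j) ` {1..k}. bb m f * \<phi> f)"
    using sum.reindex[OF inj, of "\<lambda>f. bb m f * \<phi> f"] by simp
  also have "\<dots> = (\<Sum>f = 1..h. bb m f * \<phi> f)"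
  proof (rule sum.mono_neutral_left[OF _ sub])
    show "\<forall>f\<in>{1..h} - (\<lambda>j. r*j) ` {1..k}. bb m f * \<phi> f = 0"
      by (auto simp: bb_def)
  qed simp
  finally show ?thesis by simp
qed

definition CS :: "(nat \<Rightarrow> real) \<Rightarrow> nat \<Rightarrow> real" where
  "CS \<psi> j = (\<Sum>i'<r. \<Sum>l=1..2*r. g r l * \<psi> (j - l * p i'))"

lemma sum_le2:
  assumes "finite S" "\<And>l. l \<in> S \<Longrightarrow> \<phi> l = 0 \<or> \<phi> l = 1" "\<And>l. l\<in>S \<Longrightarrow> G l \<le> 2"
    "card {l\<in>S. \<phi> l \<noteq> 0} \<le> 1"
  shows "(\<Sum>l\<in>S. G l * \<phi> l) \<le> (2::real)"
proof -
  define T where "T = {l\<in>S. \<phi> l \<noteq> 0}"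
  have fin: "finite T" using assms(1) by (simp add: T_def)
  have "(\<Sum>l\<in>S. G l * \<phi> l) = (\<Sum>l\<in>T. G l * \<phi> l)"
    by (rule sum.mono_neutral_right) (use assms(1) in \<open>auto simp: T_def\<close>)
  also have "\<dots> \<le> 2"
  proof (cases "T = {}")
    case True then show ?thesis by simp
  next
    case False
    then obtain x where x: "x \<in> T" by blast
    have all: "\<forall>a\<in>T. \<forall>b\<in>T. a = b" using assms(4) card_le_Suc0_iff_eq[OF fin] unfolding T_def[symmetric] by simp
    have "T = {x}" using x all by blast
    moreover have "\<phi> x = 1" "G x \<le> 2" using x assms(2,3) unfolding T_def by auto
    ultimately show ?thesis by simp
  qed
  finally show ?thesis .
qed

lemma mod_eq_dvd_diff: "(x::nat) \<le> y \<Longrightarrow> x mod q = y mod q \<Longrightarrow> q dvd (y - x)"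
  using mod_eq_dvd_iff_nat[of x y q] by simp

lemma p_ndvd: "i < r \<Longrightarrow> i' < r \<Longrightarrow> i \<noteq> i' \<Longrightarrow> \<not> p i dvd p i'"
proof
  assume a: "i < r" "i' < r" "i \<noteq> i'" "p i dvd p i'"
  then have "p i = p i'" using primes_dvd_imp_eq[OF p_prime[OF a(1)] p_prime[OF a(2)]] by blast
  then show False using p_inj a by blast
qed

lemma p_ndvd_small: "i < r \<Longrightarrow> 0 < l \<Longrightarrow> l \<le> 2*r \<Longrightarrow> \<not> p i dvd l"
proof
  assume a: "i < r" "0 < l" "l \<le> 2*r" "p i dvd l"
  then have "p i \<le> l" by (intro dvd_imp_le) auto
  then show False using two_r_lt_p[OF a(1)] a(3) by linarith
qed

lemma cross_card:
  assumes "i < r" "i' < r" "i \<noteq> i'" "k \<le> j"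
  shows "card {l\<in>{1..2*r}. (j - l * p i' + a) mod p i = c} \<le> 1"
proof -
  define T where "T = {l\<in>{1..2*r}. (j - l * p i' + a) mod p i = c}"
  have W: "False" if l: "l1 \<in> T" "l2 \<in> T" "l1 < l2" for l1 l2
  proof -
    have l1: "1 \<le> l1" "l1 \<le> 2*r" "(j - l1 * p i' + a) mod p i = c" using l(1) by (auto simp: T_def)
    have l2: "1 \<le> l2" "l2 \<le> 2*r" "(j - l2 * p i' + a) mod p i = c" using l(2) by (auto simp: T_def)
    have le: "l2 * p i' \<le> j" "l1 * p i' \<le> j" using lp_le[OF assms(2) l2(2)] lp_le[OF assms(2) l1(2)] assms(4) by auto
    have d: "(l2 - l1) * p i' = l2 * p i' - l1 * p i'" by (simp add: diff_mult_distrib)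
    have ll: "l1 * p i' \<le> l2 * p i'" using l(3) by simp
    have eq: "j - l1 * p i' + a = (j - l2 * p i' + a) + (l2 - l1) * p i'"
      using le ll d by linarith
    have "p i dvd (j - l1 * p i' + a) - (j - l2 * p i' + a)"
      by (rule mod_eq_dvd_diff) (use eq l1(3) l2(3) in simp_all)
    moreover have "(j - l1 * p i' + a) - (j - l2 * p i' + a) = (l2 - l1) * p i'" using eq by linarith
    ultimately have "p i dvd (l2 - l1) * p i'" by simp
    then have "p i dvd (l2 - l1) \<or> p i dvd p i'" using p_prime[OF assms(1)] prime_dvd_mult_iff by blast
    moreover have "\<not> p i dvd p i'" using p_ndvd assms by blast
    moreover have "\<not> p i dvd (l2 - l1)" using p_ndvd_small[OF assms(1), of "l2 - l1"] l(3) l2(2) by linarith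
    ultimately show False by blast
  qed
  have "\<forall>x\<in>T. \<forall>y\<in>T. x = y"
  proof (intro ballI)
    fix x y assume "x \<in> T" "y \<in> T"
    then show "x = y" using W[of x y] W[of y x] by (meson linorder_neqE_nat)
  qed
  moreover have "finite T" by (simp add: T_def)
  ultimately have "card T \<le> 1" by (metis One_nat_def card_le_Suc0_iff_eq)
  then show ?thesis by (simp add: T_def)
qed

lemma cross_zero:
  assumes "i < r" "i' < r" "i \<noteq> i'" "k \<le> j" "(j + a) mod p i = k mod p i" "l \<in> {1..2*r}"
  shows "(j - l * p i' + a) mod p i \<noteq> k mod p i"
proof
  assume a: "(j - l * p i' + a) mod p i = k mod p i"
  have le: "l * p i' \<le> j" using lp_le[OF assms(2), of l] assms by auto
  have eq: "j + a = (j - l * p i' + a) + l * p i'" using le by simp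
  have "p i dvd (j + a) - (j - l * p i' + a)"
    by (rule mod_eq_dvd_diff) (use eq a assms(5) in simp_all)
  moreover have "(j + a) - (j - l * p i' + a) = l * p i'" using eq by linarith
  ultimately have "p i dvd l * p i'" by simp
  then have "p i dvd l \<or> p i dvd p i'" using p_prime[OF assms(1)] prime_dvd_mult_iff by blast
  moreover have "\<not> p i dvd p i'" using p_ndvd assms by blast
  moreover have "\<not> p i dvd l" using p_ndvd_small[OF assms(1), of l] assms(6) by auto
  ultimately show False by blast
qed

lemma own_mod:
  assumes "i < r" "l \<le> 2*r" "k \<le> j"
  shows "(j - l * p i + a) mod p i = (j + a) mod p i"
proof -
  have le: "l * p i \<le> j" using lp_le[OF assms(1,2)] assms(3) by auto
  have "j + a = (j - l * p i + a) + l * p i" using le by simp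
  then show ?thesis by (metis mod_mult_self1 mult.commute)
qed

lemma CS_split:
  assumes "i < r"
  shows "CS \<psi> j = (\<Sum>l=1..2*r. g r l * \<psi> (j - l * p i)) + (\<Sum>i'\<in>{..<r}-{i}. \<Sum>l=1..2*r. g r l * \<psi> (j - l * p i'))"
  unfolding CS_def using assms by (simp add: sum.remove)

lemma sum_card_bound:
  assumes "\<And>i'. i' \<in> {..<r}-{i} \<Longrightarrow> F i' \<le> (2::real)" "i < r"
  shows "(\<Sum>i'\<in>{..<r}-{i}. F i') \<le> 2 * real r - 2"
proof -
  have "(\<Sum>i'\<in>{..<r}-{i}. F i') \<le> of_nat (card ({..<r}-{i})) * 2"
    using sum_bounded_above[of "{..<r}-{i}" F 2] assms(1) by simp
  also have "card ({..<r}-{i}) = r - 1" using assms(2) by simp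
  finally show ?thesis using r2 by (simp add: of_nat_diff)
qed

lemma CS_periodic:
  assumes "i < r" "\<And>s. \<psi> s = (if (s + a) mod p i = k mod p i then 1 else 0)" "k \<le> j"
  shows "(j+a) mod p i = k mod p i \<Longrightarrow> CS \<psi> j = 2 * real r"
    and "(j+a) mod p i \<noteq> k mod p i \<Longrightarrow> CS \<psi> j \<le> 2 * real r - 2"
proof -
  have own: "(\<Sum>l=1..2*r. g r l * \<psi> (j - l * p i)) = (if (j+a) mod p i = k mod p i then 2 * real r else 0)"
  proof -
    have "(\<Sum>l=1..2*r. g r l * \<psi> (j - l * p i)) = (\<Sum>l=1..2*r. g r l * (if (j+a) mod p i = k mod p i then 1 else 0))"
    proof (rule sum.cong)
      fix l assume "l \<in> {1..2*r}"
      then have "(j - l * p i + a) mod p i = (j + a) mod p i" using own_mod[OF assms(1) _ assms(3)] by simp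
      then show "g r l * \<psi> (j - l * p i) = g r l * (if (j+a) mod p i = k mod p i then 1 else 0)"
        using assms(2)[of "j - l * p i"] by simp
    qed simp
    also have "\<dots> = (if (j+a) mod p i = k mod p i then 2 * real r else 0)"
      using psum_props(1)[OF r2] by (simp add: sum_distrib_right[symmetric])
    finally show ?thesis .
  qed
  {
    assume e: "(j+a) mod p i = k mod p i"
    have "(\<Sum>i'\<in>{..<r}-{i}. \<Sum>l=1..2*r. g r l * \<psi> (j - l * p i')) = 0"
    proof (intro sum.neutral ballI)
      fix i' l assume i': "i' \<in> {..<r}-{i}" and l: "l \<in> {1..2*r}"
      have "(j - l * p i' + a) mod p i \<noteq> k mod p i" using cross_zero[OF assms(1) _ _ assms(3) e l] i' by auto
      then show "g r l * \<psi> (j - l * p i') = 0" using assms(2)[of "j - l * p i'"] by simp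
    qed
    then show "CS \<psi> j = 2 * real r" using CS_split[OF assms(1)] own e by simp
  next
    assume e: "(j+a) mod p i \<noteq> k mod p i"
    have "(\<Sum>i'\<in>{..<r}-{i}. \<Sum>l=1..2*r. g r l * \<psi> (j - l * p i')) \<le> 2 * real r - 2"
    proof (rule sum_card_bound[OF _ assms(1)])
      fix i' assume i': "i' \<in> {..<r}-{i}"
      show "(\<Sum>l=1..2*r. g r l * \<psi> (j - l * p i')) \<le> 2"
      proof (rule sum_le2)
        have "{l\<in>{1..2*r}. \<psi> (j - l * p i') \<noteq> 0} = {l\<in>{1..2*r}. (j - l * p i' + a) mod p i = k mod p i}"
          using assms(2) by auto
        then show "card {l\<in>{1..2*r}. \<psi> (j - l * p i') \<noteq> 0} \<le> 1"
          using cross_card[OF assms(1), of i' j a] i' assms(3) by simp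
      next
        fix l show "\<psi> (j - l * p i') = 0 \<or> \<psi> (j - l * p i') = 1" using assms(2)[of "j - l * p i'"] by simp
      qed (simp_all add: g_le2)
    qed
    then show "CS \<psi> j \<le> 2 * real r - 2" using CS_split[OF assms(1)] own e by simp
  }
qed

lemma CS_low:
  assumes "\<And>s. \<psi> s = (if (s + a) mod p i = k mod p i \<and> s \<le> K then 1 else 0)"
    "\<And>s. \<psi>' s = (if (s + a) mod p i = k mod p i then 1 else 0)" "j \<le> K + 1"
  shows "CS \<psi> j = CS \<psi>' j"
  unfolding CS_def
proof (intro sum.cong refl)
  fix i' l assume i': "i' \<in> {..<r}" and l: "l \<in> {1..2*r}"
  have "1 \<le> l * p i'" using l prime_gt_0_nat[OF p_prime[of i']] i' by (simp add: Suc_le_eq)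
  then have "j - l * p i' \<le> K" using assms(3) by linarith
  then show "g r l * \<psi> (j - l * p i') = g r l * \<psi>' (j - l * p i')" using assms(1,2) by simp
qed

lemma CS_killed:
  assumes "i < r" "\<And>s. \<psi> s = (if (s + a) mod p i = k mod p i \<and> s \<le> K then 1 else 0)" "k \<le> j"
    "(K + 1 + a) mod p i = k mod p i" "K + 2 \<le> j"
  shows "CS \<psi> j \<le> 2 * real r - 1"
proof (cases "(j+a) mod p i = k mod p i")
  case False
  have own: "(\<Sum>l=1..2*r. g r l * \<psi> (j - l * p i)) = 0"
  proof (intro sum.neutral ballI)
    fix l assume "l \<in> {1..2*r}"
    then have "(j - l * p i + a) mod p i = (j + a) mod p i" using own_mod[OF assms(1) _ assms(3)] by simp
    then show "g r l * \<psi> (j - l * p i) = 0" using assms(2)[of "j - l * p i"] False by simp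
  qed
  have "(\<Sum>i'\<in>{..<r}-{i}. \<Sum>l=1..2*r. g r l * \<psi> (j - l * p i')) \<le> 2 * real r - 2"
  proof (rule sum_card_bound[OF _ assms(1)])
    fix i' assume i': "i' \<in> {..<r}-{i}"
    show "(\<Sum>l=1..2*r. g r l * \<psi> (j - l * p i')) \<le> 2"
    proof (rule sum_le2)
      have "{l\<in>{1..2*r}. \<psi> (j - l * p i') \<noteq> 0} \<subseteq> {l\<in>{1..2*r}. (j - l * p i' + a) mod p i = k mod p i}"
        using assms(2) by auto
      then have "card {l\<in>{1..2*r}. \<psi> (j - l * p i') \<noteq> 0} \<le> card {l\<in>{1..2*r}. (j - l * p i' + a) mod p i = k mod p i}"
        by (intro card_mono) auto
      also have "\<dots> \<le> 1" using cross_card[OF assms(1), of i' j a] i' assms(3) by simp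
      finally show "card {l\<in>{1..2*r}. \<psi> (j - l * p i') \<noteq> 0} \<le> 1" .
    next
      fix l show "\<psi> (j - l * p i') = 0 \<or> \<psi> (j - l * p i') = 1" using assms(2)[of "j - l * p i'"] by simp
    qed (simp_all add: g_le2)
  qed
  then show ?thesis using CS_split[OF assms(1)] own by simp
next
  case e: True
  have cross: "(\<Sum>i'\<in>{..<r}-{i}. \<Sum>l=1..2*r. g r l * \<psi> (j - l * p i')) = 0"
  proof (intro sum.neutral ballI)
    fix i' l assume i': "i' \<in> {..<r}-{i}" and l: "l \<in> {1..2*r}"
    have "(j - l * p i' + a) mod p i \<noteq> k mod p i" using cross_zero[OF assms(1) _ _ assms(3) e l] i' by auto
    then show "g r l * \<psi> (j - l * p i') = 0" using assms(2)[of "j - l * p i'"] by simp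
  qed
  have pp: "p i > 0" using prime_gt_0_nat[OF p_prime[OF assms(1)]] .
  have "p i dvd (j + a) - (K + 1 + a)"
    by (rule mod_eq_dvd_diff) (use assms(4,5) e in simp_all)
  then have "p i dvd j - K - 1" by simp
  then obtain q where q: "j - K - 1 = p i * q" by blast
  have q1: "1 \<le> q" using q assms(5) by (cases q) auto
  have own: "(\<Sum>l=1..2*r. g r l * \<psi> (j - l * p i)) = (\<Sum>l=1..2*r. if q < l then g r l else 0)"
  proof (rule sum.cong[OF refl])
    fix l assume l: "l \<in> {1..2*r}"
    have m: "(j - l * p i + a) mod p i = (j + a) mod p i" using own_mod[OF assms(1) _ assms(3)] l by simp
    have le: "l * p i \<le> j" using lp_le[OF assms(1)] l assms(3) by fastforce
    have "(j - l * p i \<le> K) = (q < l)"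
    proof
      assume a: "j - l * p i \<le> K"
      show "q < l"
      proof (rule ccontr)
        assume "\<not> q < l"
        then have "l * p i \<le> q * p i" using mult_le_mono1[of l q "p i"] by linarith
        moreover have "p i * q = q * p i" by simp
        ultimately show False using a q le assms(5) by linarith
      qed
    next
      assume "q < l"
      then have "(q + 1) * p i \<le> l * p i" by (intro mult_le_mono) auto
      moreover have "p i * q = q * p i" by simp
      ultimately show "j - l * p i \<le> K" using q pp by (simp add: algebra_simps)
    qed
    then show "g r l * \<psi> (j - l * p i) = (if q < l then g r l else 0)"
      using assms(2)[of "j - l * p i"] m e by simp
  qed
  show ?thesis using CS_split[OF assms(1)] own cross tail_le[OF r2 q1] by simp
qed

definition Xc :: "nat \<Rightarrow> nat \<Rightarrow> real" where
  "Xc i t = (if t mod p i = k mod p i then 1 else 0)"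

lemma theta_eq: "thetabar m = 2 * real r" by (simp add: thetabar_def)

lemma step_ge: "x \<ge> 0 \<Longrightarrow> step x = 1" by (simp add: step_def)
lemma step_lt: "x < 0 \<Longrightarrow> step x = 0" by (simp add: step_def)

lemma step_CS:
  "c = 2 * real r \<Longrightarrow> step (c - thetabar m) = 1"
  "c \<le> 2 * real r - 1 \<Longrightarrow> step (c - thetabar m) = 0"
  by (auto simp: theta_eq step_def)

lemma xs_eq: assumes "i < r" shows "xs m i t = Xc i t"
  unfolding xs_def
proof (rule thr_seq_eq)
  fix t assume t: "t < k"
  have pp: "p i > 0" using prime_gt_0_nat[OF p_prime[OF assms]] .
  have b: "beta m i = k mod p i" unfolding beta_def mu_def using minus_div_mult_eq_mod[of k "p i"] by (simp add: mult.commute)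
  have "(\<exists>l. l < mu m i \<and> t = beta m i + l * p i) = (t mod p i = k mod p i)"
  proof
    assume "\<exists>l. l < mu m i \<and> t = beta m i + l * p i"
    then obtain l where "t = beta m i + l * p i" by blast
    then show "t mod p i = k mod p i" using b by simp
  next
    assume e: "t mod p i = k mod p i"
    have tt: "t = t div p i * p i + k mod p i" using e by (metis div_mult_mod_eq)
    have "t div p i < mu m i"
    proof (rule ccontr)
      assume "\<not> t div p i < mu m i"
      then have "k div p i * p i \<le> t div p i * p i" unfolding mu_def by (intro mult_le_mono1) simp
      then have "k \<le> t" using tt by (metis add_le_mono1 div_mult_mod_eq)
      then show False using t by simp
    qed
    then show "\<exists>l. l < mu m i \<and> t = beta m i + l * p i" using tt b by (intro exI[of _ "t div p i"]) simp
  qed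
  then show "(if \<exists>l. l < mu m i \<and> t = beta m i + l * p i then 1 else 0) = Xc i t"
    by (simp add: Xc_def)
next
  fix t assume t: "k \<le> t"
  have "(\<Sum>j = 1..k. abar m j * Xc i (t - j)) = CS (Xc i) t"
    unfolding sum_abar CS_def by simp
  moreover have per: "\<And>s. Xc i s = (if (s + 0) mod p i = k mod p i then 1 else 0)" by (simp add: Xc_def)
  ultimately show "step ((\<Sum>j = 1..k. abar m j * Xc i (t - j)) - thetabar m) = Xc i t"
  proof (cases "t mod p i = k mod p i")
    case True
    then have "CS (Xc i) t = 2 * real r" using CS_periodic(1)[OF assms per t] by simp
    then show ?thesis using True step_CS(1) \<open>(\<Sum>j = 1..k. abar m j * Xc i (t - j)) = CS (Xc i) t\<close>
      by (simp add: Xc_def)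
  next
    case False
    then have "CS (Xc i) t \<le> 2 * real r - 2" using CS_periodic(2)[OF assms per t] by simp
    then show ?thesis using False step_CS(2) \<open>(\<Sum>j = 1..k. abar m j * Xc i (t - j)) = CS (Xc i) t\<close>
      by (simp add: Xc_def)
  qed
qed

lemma chan_sum:
  assumes "h \<le> n"
  shows "(\<Sum>f = 1..h. bb m f * G (n - f)) = CS (\<lambda>s. G (r*s + n mod r)) (n div r)"
proof -
  have r0: "r > 0" using r2 by simp
  have kn: "k \<le> n div r" using assms r0 by (simp add: hh_def less_eq_div_iff_mult_less_eq mult.commute)
  have "(\<Sum>f = 1..h. bb m f * G (n - f)) = (\<Sum>i<r. \<Sum>l = 1..2*r. g r l * G (n - r * (l * p i)))"
    unfolding sum_bb sum_abar by simp
  also have "\<dots> = CS (\<lambda>s. G (r*s + n mod r)) (n div r)"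
    unfolding CS_def
  proof (intro sum.cong refl)
    fix i l assume i: "i \<in> {..<r}" and l: "l \<in> {1..2*r}"
    have "l * p i \<le> n div r" using lp_le[of i l] i l kn by auto
    then have "n - r * (l * p i) = r * (n div r - l * p i) + n mod r"
    proof -
      assume x: "l * p i \<le> n div r"
      have e1: "n = r * (n div r) + n mod r" by simp
      have e2: "r * (n div r - l * p i) = r * (n div r) - r * (l * p i)" by (simp add: diff_mult_distrib2)
      have e3: "r * (l * p i) \<le> r * (n div r)" using x by simp
      show ?thesis using e1 e2 e3 by linarith
    qed
    then show "g r l * G (n - r * (l * p i)) = g r l * G (r * (n div r - l * p i) + n mod r)" by simp
  qed
  finally show ?thesis .
qed

definition Yc :: "nat \<Rightarrow> real" where "Yc n = Xc (n mod r) (1 + n div r)"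

lemma Yc_chan: "i < r \<Longrightarrow> Yc (r*s + i) = Xc i (1 + s)"
  by (simp add: Yc_def)

lemma ys_eq: "ys m n = Yc n"
  unfolding ys_def
proof (rule thr_seq_eq)
  fix n show "xs m (n mod r) (1 + n div r) = Yc n" using xs_eq r2 by (simp add: Yc_def)
next
  fix n assume n: "h \<le> n"
  have r0: "r > 0" using r2 by simp
  have kn: "k \<le> n div r" using n r0 by (simp add: hh_def less_eq_div_iff_mult_less_eq mult.commute)
  have i: "n mod r < r" using r0 by simp
  have per: "\<And>s. (\<lambda>s. Yc (r*s + n mod r)) s = (if (s + 1) mod p (n mod r) = k mod p (n mod r) then 1 else 0)"
    using Yc_chan[OF i] by (simp add: Xc_def add.commute)
  have cs: "(\<Sum>f = 1..h. bb m f * Yc (n - f)) = CS (\<lambda>s. Yc (r*s + n mod r)) (n div r)"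
    by (rule chan_sum[OF n])
  show "step ((\<Sum>f = 1..h. bb m f * Yc (n - f)) - thetabar m) = Yc n"
  proof (cases "(n div r + 1) mod p (n mod r) = k mod p (n mod r)")
    case True
    then have "Yc n = 1" by (simp add: Yc_def Xc_def add.commute)
    then show ?thesis using CS_periodic(1)[OF i per kn] True step_CS(1) cs by simp
  next
    case False
    then have "Yc n = 0" by (simp add: Yc_def Xc_def add.commute)
    then show ?thesis using CS_periodic(2)[OF i per kn] False step_CS(2) cs by simp
  qed
qed

end

locale L20d = L20 +
  fixes d :: nat
  assumes d_lt: "d < rho m"
begin

abbreviation "L \<equiv> Lcm (pr m ` {0..d})"

lemma L1_eq: "L1 m d = r * L" by (simp add: L1_def)

lemma L_pos: "L > 0"
proof -
  have "0 \<notin> pr m ` {0..d}"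
  proof
    assume "0 \<in> pr m ` {0..d}"
    then obtain i where "i \<le> d" "p i = 0" by auto
    then show False using d_lt prime_gt_0_nat[OF p_prime[of i]] by simp
  qed
  then show ?thesis using Lcm_0_iff_nat[of "pr m ` {0..d}"] by (simp add: Nat.neq0_conv[symmetric] del: Nat.neq0_conv)
qed

lemma dvd_L: "i \<le> d \<Longrightarrow> p i dvd L" by (rule dvd_Lcm) simp

lemma Xc_per: "i \<le> d \<Longrightarrow> Xc i (t + L) = Xc i t"
proof -
  assume "i \<le> d"
  then obtain c where "L = p i * c" using dvd_L by blast
  then show ?thesis by (simp add: Xc_def)
qed

definition Wc :: "nat \<Rightarrow> real" where
  "Wc n = (if n mod r \<le> d then (if n div r \<le> k - 2 then Xc (n mod r) (1 + n div r) else 0)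
           else Xc (n mod r) (1 + n div r + L))"

lemma Xc_k: "Xc i k = 1" by (simp add: Xc_def)

lemma ws_eq: "ws m d n = Wc n"
  unfolding ws_def
proof (rule thr_seq_eq)
  fix n assume n: "n < h"
  have r0: "r > 0" using r2 by simp
  have i: "n mod r < r" using r0 by simp
  have "n div r < k" using n r0 by (simp add: hh_def less_mult_imp_div_less mult.commute)
  then have j: "n div r \<le> k - 1" by linarith
  have dv: "(n + r * L) div r = n div r + L" "(n + r*L) mod r = n mod r" using r0 by simp_all
  show "(let i = n mod r; j = n div r in if i \<le> d then if j \<le> k - 2 then xs m i (1 + j) else 1 - xs m i k
          else ys m (n + L1 m d)) = Wc n"
    unfolding Let_def Wc_def L1_eq ys_eq Yc_def dv using xs_eq[OF i] Xc_k[of "n mod r"] j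
    by (auto simp: add.commute add.left_commute)
next
  fix n assume n: "h \<le> n"
  have r0: "r > 0" using r2 by simp
  have kn: "k \<le> n div r" using n r0 by (simp add: hh_def less_eq_div_iff_mult_less_eq mult.commute)
  have i: "n mod r < r" using r0 by simp
  have cs: "(\<Sum>f = 1..h. bb m f * Wc (n - f)) = CS (\<lambda>s. Wc (r*s + n mod r)) (n div r)"
    by (rule chan_sum[OF n])
  show "step ((\<Sum>f = 1..h. bb m f * Wc (n - f)) - thetabar m) = Wc n"
  proof (cases "n mod r \<le> d")
    case True
    have kil: "\<And>s. (\<lambda>s. Wc (r*s + n mod r)) s = (if (s + 1) mod p (n mod r) = k mod p (n mod r) \<and> s \<le> k - 2 then 1 else 0)"
      using True i by (simp add: Wc_def Xc_def add.commute)
    have kk: "k - 2 + 1 + 1 = k" using k_ge by linarith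
    have kk2: "(k - 2 + 1 + 1) mod p (n mod r) = k mod p (n mod r)" "k - 2 + 2 \<le> n div r" using kk kn by simp_all
    have "Wc n = 0" using True kn k_ge by (simp add: Wc_def)
    then show ?thesis using CS_killed[OF i kil kn kk2] step_CS(2) cs by simp
  next
    case False
    have per: "\<And>s. (\<lambda>s. Wc (r*s + n mod r)) s = (if (s + (1 + L)) mod p (n mod r) = k mod p (n mod r) then 1 else 0)"
      using False i by (simp add: Wc_def Xc_def add.commute add.left_commute)
    show ?thesis
    proof (cases "(n div r + (1 + L)) mod p (n mod r) = k mod p (n mod r)")
      case True
      then have "Wc n = 1" using False by (simp add: Wc_def Xc_def add.commute add.left_commute)
      then show ?thesis using CS_periodic(1)[OF i per kn] True step_CS(1) cs by simp
    next
      case F2: False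
      then have "Wc n = 0" using False by (simp add: Wc_def Xc_def add.commute add.left_commute)
      then show ?thesis using CS_periodic(2)[OF i per kn] F2 step_CS(2) cs by simp
    qed
  qed
qed

definition n0 :: nat where "n0 = r * (L + k - 1)"

definition Zc :: "nat \<Rightarrow> real" where
  "Zc n = (if n mod r \<le> d \<and> L + k - 2 < n div r then 0 else Xc (n mod r) (1 + n div r))"

definition Bs :: "nat set" where "Bs = {f. 1 \<le> f \<and> f \<le> h - d \<and> Yc (n0 - f) = 1}"

lemma r0: "r > 0" using r2 by simp

lemma n0_alt: "h + L1 m d - r = n0"
proof -
  have "r * (L + k - 1) = r * L + r * k - r" using L_pos by (simp add: diff_mult_distrib2 algebra_simps)
  then show ?thesis by (simp add: hh_def L1_eq n0_def mult.commute)
qed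

lemma B0_eq: "B0 m d = Bs"
  unfolding B0_def Bs_def ys_eq using n0_alt by (metis diff_diff_left)

lemma Bs_sub: "Bs \<subseteq> {1..h}" by (auto simp: Bs_def)
lemma Bs_fin: "finite Bs" using Bs_sub finite_subset by blast

lemma AA_eq: "AA m d = (\<Union>l\<in>{0..d}. (\<lambda>f. l + f) ` Bs)"
  by (simp add: AA_def Bl_def B0_eq)

lemma AA_sub: "AA m d \<subseteq> {1..h}"
proof
  fix f assume "f \<in> AA m d"
  then obtain l f0 where "l \<le> d" "f0 \<in> Bs" "f = l + f0" unfolding AA_eq by auto
  then show "f \<in> {1..h}" using d_lt r2 by (auto simp: Bs_def hh_def)
qed

lemma AA_fin: "finite (AA m d)" using AA_sub finite_subset by blast

lemma Zc_01: "Zc n = 0 \<or> Zc n = 1" by (simp add: Zc_def Xc_def)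

lemma Zc_Yc: "n div r \<le> L + k - 2 \<Longrightarrow> Zc n = Yc n" by (simp add: Zc_def Yc_def)

lemma Zc_one: "Zc n = 1 \<Longrightarrow> Xc (n mod r) (1 + n div r) = 1"
  by (simp add: Zc_def split: if_splits)

lemma blk: "x mod r = y mod r \<Longrightarrow> int x - int y = int r * (int (x div r) - int (y div r))"
proof -
  assume a: "x mod r = y mod r"
  have "int x = int r * int (x div r) + int (x mod r)" "int y = int r * int (y div r) + int (y mod r)"
    by (metis mult_div_mod_eq of_nat_add of_nat_mult)+
  then show ?thesis using a by (simp add: algebra_simps)
qed

lemma Xc_cong: "Xc c (1 + a) = 1 \<Longrightarrow> Xc c (1 + b) = 1 \<Longrightarrow> int (p c) dvd (int a - int b)"
proof -
  assume "Xc c (1 + a) = 1" "Xc c (1 + b) = 1"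
  then have "(1 + a) mod p c = (1 + b) mod p c" by (simp add: Xc_def split: if_splits)
  then have "int (1 + a) mod int (p c) = int (1 + b) mod int (p c)" by (metis of_nat_mod)
  then have "int (p c) dvd int (1 + a) - int (1 + b)" using mod_eq_dvd_iff by blast
  then show ?thesis by simp
qed

lemma Xc_shift: "int (p c) dvd e \<Longrightarrow> Xc c (1 + a) = 1 \<Longrightarrow> int b = int a + e \<Longrightarrow> Xc c (1 + b) = 1"
proof -
  assume a: "int (p c) dvd e" "Xc c (1 + a) = 1" "int b = int a + e"
  then have "(1 + a) mod p c = k mod p c" by (simp add: Xc_def split: if_splits)
  then have "int (1 + a) mod int (p c) = int k mod int (p c)" by (metis of_nat_mod)
  moreover have "int (1 + b) mod int (p c) = int (1 + a) mod int (p c)"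
    using a(1,3) by (simp add: mod_eq_dvd_iff)
  ultimately have "int ((1 + b) mod p c) = int (k mod p c)" by (simp add: of_nat_mod)
  then show ?thesis by (simp add: Xc_def)
qed

definition Bc :: "nat \<Rightarrow> nat set" where "Bc c = {f \<in> Bs. (n0 - f) mod r = c}"

lemma n0_split: "n0 = r * (L + k - 2) + r"
proof -
  have "L + k - 1 = (L + k - 2) + 1" using k_ge by linarith
  then show ?thesis by (simp add: n0_def)
qed

lemma n0_h: "n0 = r * L + (h - r)"
proof -
  have "r * (L + k - 1) = r * L + r * (k - 1)" using k_ge by (simp add: algebra_simps)
  moreover have "r * (k - 1) = h - r" by (simp add: hh_def diff_mult_distrib2)
  ultimately show ?thesis by (simp add: n0_def)
qed

lemma h_ge_r: "r \<le> h" using k_ge by (simp add: hh_def)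

lemma Bc_ge: assumes c: "c < r" shows "2 * r \<le> card (Bc c)"
proof -
  define P where "P = p c"
  have P0: "P > 0" using prime_gt_0_nat[OF p_prime[OF c]] by (simp add: P_def)
  define w where "w = (L - 1) div P"
  define js where "js = k - 1 + P * w"
  have Pw1: "P * w \<le> L - 1" unfolding w_def by (metis div_mult_mod_eq le_add1 mult.commute)
  have Pw2: "L - 1 < P * w + P"
  proof -
    have "(L - 1) mod P < P" using P0 by simp
    moreover have "P * w + (L - 1) mod P = L - 1" unfolding w_def by (metis div_mult_mod_eq mult.commute)
    ultimately show ?thesis by linarith
  qed
  have kb: "2 * r * P + 1 \<le> k" using lp_le[OF c, of "2*r"] by (simp add: P_def)
  define jj where "jj a = js - a * P" for a
  define q where "q a = r * jj a + c" for a
  have low: "L \<le> jj a" if "a < 2*r" for a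
  proof -
    have "(a + 1) * P \<le> 2 * r * P" using that by (intro mult_le_mono1) simp
    then show ?thesis unfolding jj_def js_def using kb Pw2 L_pos by (simp add: algebra_simps)
  qed
  have high: "jj a \<le> L + k - 2" for a unfolding jj_def js_def using Pw1 L_pos k_ge by linarith
  have qm: "q a mod r = c" "q a div r = jj a" for a using c by (simp_all add: q_def)
  have qlt: "q a < n0" for a
  proof -
    have "r * jj a \<le> r * (L + k - 2)" using high by simp
    then show ?thesis unfolding q_def using c n0_split by linarith
  qed
  have qge: "r * L \<le> q a" if "a < 2*r" for a
  proof -
    have "r * L \<le> r * jj a" using low[OF that] by simp
    then show ?thesis unfolding q_def by linarith
  qed
  define F where "F a = n0 - q a" for a
  have inB: "F a \<in> Bc c" if a: "a < 2*r" for a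
  proof -
    have f1: "1 \<le> F a" using qlt[of a] by (simp add: F_def)
    have f2: "F a \<le> h - d" using qge[OF a] n0_h d_lt h_ge_r unfolding F_def by linarith
    have nq: "n0 - F a = q a" using qlt[of a] by (simp add: F_def)
    have ap: "a * P \<le> js" using low[OF a] high unfolding jj_def using L_pos by linarith
    have "(1 + jj a) + a * P = k + P * w" unfolding jj_def js_def using ap k_ge js_def by linarith
    then have "(1 + jj a) mod P = (k + P * w) mod P" by (metis mod_mult_self2 mult.commute)
    then have "(1 + jj a) mod P = k mod P" by simp
    then have "Yc (n0 - F a) = 1" unfolding nq Yc_def qm by (simp add: Xc_def P_def)
    then show ?thesis using f1 f2 nq qm by (simp add: Bc_def Bs_def)
  qed
  have inj: "inj_on F {..<2*r}"
  proof (rule inj_onI)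
    fix a b assume a: "a \<in> {..<2*r}" and b: "b \<in> {..<2*r}" and e: "F a = F b"
    have "q a = q b" using e qlt[of a] qlt[of b] unfolding F_def by linarith
    then have "jj a = jj b" using qm by metis
    moreover have "a * P \<le> js" using low[of a] a L_pos unfolding jj_def by auto
    moreover have "b * P \<le> js" using low[of b] b L_pos unfolding jj_def by auto
    ultimately have "a * P = b * P" unfolding jj_def by linarith
    then show "a = b" using P0 by simp
  qed
  have "card (F ` {..<2*r}) = 2 * r" using card_image[OF inj] by simp
  moreover have "F ` {..<2*r} \<subseteq> Bc c" using inB by auto
  moreover have "finite (Bc c)" using Bs_fin by (simp add: Bc_def)
  ultimately show ?thesis by (metis card_mono)
qed

lemma mod_int_iff: "(x::nat) mod r = y mod r \<longleftrightarrow> int r dvd int x - int y"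
  by (metis mod_eq_dvd_iff of_nat_eq_iff of_nat_mod)

lemma card_part:
  assumes "finite S"
  shows "card S = (\<Sum>c<r. card {f\<in>S. \<phi> f mod r = c})"
proof -
  have "S = (\<Union>c<r. {f\<in>S. \<phi> f mod r = c})" using r0 by auto
  then have "card S = card (\<Union>c<r. {f\<in>S. \<phi> f mod r = c})" by simp
  also have "\<dots> = (\<Sum>c<r. card {f\<in>S. \<phi> f mod r = c})"
    by (rule card_UN_disjoint) (use assms in auto)
  finally show ?thesis .
qed

definition Dset :: "nat \<Rightarrow> nat set" where "Dset n = {f \<in> AA m d. Zc (n - f) = 1}"
definition Dc :: "nat \<Rightarrow> nat \<Rightarrow> nat set" where "Dc n c = {f \<in> Dset n. (n - f) mod r = c}"
definition Sl :: "nat \<Rightarrow> nat \<Rightarrow> nat \<Rightarrow> nat set" where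
  "Sl n l c = {f \<in> Bs. Zc (n - l - f) = 1 \<and> (n - l - f) mod r = c}"

lemma Dset_fin: "finite (Dset n)" using AA_fin by (simp add: Dset_def)

lemma card_Dset: "card (Dset n) = (\<Sum>c<r. card (Dc n c))"
  unfolding Dc_def by (rule card_part[OF Dset_fin])

lemma card_Bs: "card Bs = (\<Sum>c<r. card (Bc c))"
  unfolding Bc_def by (rule card_part[OF Bs_fin])

lemma h_le_n0: "h \<le> n0"
proof -
  have "r \<le> r * L" using L_pos by simp
  then show ?thesis using n0_h h_ge_r by linarith
qed

lemma kill_card: "l0 \<le> d \<Longrightarrow> card Bs \<le> card (Dset (n0 + l0))"
proof -
  assume l0: "l0 \<le> d"
  have "(\<lambda>f. l0 + f) ` Bs \<subseteq> Dset (n0 + l0)"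
  proof
    fix x assume "x \<in> (\<lambda>f. l0 + f) ` Bs"
    then obtain f where f: "f \<in> Bs" "x = l0 + f" by blast
    have "x \<in> AA m d" unfolding AA_eq using f l0 by auto
    moreover have "n0 + l0 - x = n0 - f" using f by simp
    moreover have "(n0 - f) div r \<le> L + k - 2"
    proof -
      have "n0 - f < n0" using f h_le_n0 by (auto simp: Bs_def)
      then have "n0 - f < (L + k - 2 + 1) * r" using n0_split by (simp add: algebra_simps)
      then have "(n0 - f) div r < L + k - 2 + 1" by (rule less_mult_imp_div_less)
      then show ?thesis by simp
    qed
    ultimately show "x \<in> Dset (n0 + l0)" using f Zc_Yc by (simp add: Dset_def Bs_def)
  qed
  moreover have "card ((\<lambda>f. l0 + f) ` Bs) = card Bs" by (rule card_image) simp
  ultimately show ?thesis using Dset_fin by (metis card_mono)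
qed

lemma Dc_union: "card (Dc n c) \<le> (\<Sum>l\<in>{0..d}. card (Sl n l c))"
proof -
  have "Dc n c \<subseteq> (\<Union>l\<in>{0..d}. (\<lambda>f. l + f) ` Sl n l c)"
  proof
    fix x assume x: "x \<in> Dc n c"
    then have "x \<in> AA m d" by (simp add: Dc_def Dset_def)
    then obtain l f where lf: "l \<in> {0..d}" "f \<in> Bs" "x = l + f" unfolding AA_eq by blast
    have "n - x = n - l - f" using lf by simp
    then have "f \<in> Sl n l c" using x lf by (simp add: Dc_def Dset_def Sl_def)
    then show "x \<in> (\<Union>l\<in>{0..d}. (\<lambda>f. l + f) ` Sl n l c)" using lf by blast
  qed
  then have "card (Dc n c) \<le> card (\<Union>l\<in>{0..d}. (\<lambda>f. l + f) ` Sl n l c)"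
    by (intro card_mono) (auto simp: Sl_def intro: finite_subset[OF _ Bs_fin])
  also have "\<dots> \<le> (\<Sum>l\<in>{0..d}. card ((\<lambda>f. l + f) ` Sl n l c))" by (rule card_UN_le) simp
  also have "\<dots> \<le> (\<Sum>l\<in>{0..d}. card (Sl n l c))" by (intro sum_mono card_image_le) (auto simp: Sl_def intro: finite_subset[OF _ Bs_fin])
  finally show ?thesis .
qed

lemma Sl_pos:
  assumes "h \<le> n" "l \<le> d" "f \<in> Bs"
  shows "int (n - l - f) = int (n0 - f) + (int n - int l - int n0)" "f \<le> h" "1 \<le> f"
proof -
  have "f \<le> h - d" "1 \<le> f" using assms(3) by (auto simp: Bs_def)
  then show "f \<le> h" "1 \<le> f" by auto
  have "l + f \<le> n" using \<open>f \<le> h - d\<close> assms(1,2) d_lt h_ge_r by linarith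
  moreover have "f \<le> n0" using \<open>f \<le> h - d\<close> h_le_n0 by linarith
  ultimately show "int (n - l - f) = int (n0 - f) + (int n - int l - int n0)" by (simp add: of_nat_diff)
qed

lemma Yc_one: "Yc q = 1 \<Longrightarrow> Xc (q mod r) (1 + q div r) = 1" by (simp add: Yc_def)

lemma Sl_le1:
  assumes n: "h \<le> n" and l: "l \<le> d" and c: "c < r"
    and nd: "\<not> int (r * p c) dvd (int n - int l - int n0)"
  shows "card (Sl n l c) \<le> 1"
proof -
  define \<delta> where "\<delta> = int n - int l - int n0"
  have props: "Xc (q mod r) (1 + q div r) = 1 \<and> Xc c (1 + v div r) = 1 \<and> v mod r = c \<and> int v = int q + \<delta>"
    if f: "f \<in> Sl n l c" and qv: "q = n0 - f" "v = n - l - f" for f q v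
  proof -
    have fB: "f \<in> Bs" using f by (simp add: Sl_def)
    have "Yc q = 1" using fB qv by (simp add: Bs_def)
    moreover have "Zc v = 1" "v mod r = c" using f qv by (simp_all add: Sl_def)
    ultimately show ?thesis using Yc_one Zc_one Sl_pos[OF n l fB] qv \<delta>_def by auto
  qed
  have nr: "\<not> int r dvd \<delta>" if f: "f \<in> Sl n l c" for f
  proof
    assume "int r dvd \<delta>"
    then obtain e where e: "\<delta> = int r * e" by blast
    define q where "q = n0 - f"
    define v where "v = n - l - f"
    have P: "Xc (q mod r) (1 + q div r) = 1" "Xc c (1 + v div r) = 1" "v mod r = c" "int v = int q + \<delta>"
      using props[OF f q_def v_def] by auto
    have "v mod r = q mod r" using P(4) e by (simp add: mod_int_iff)
    then have b: "int v - int q = int r * (int (v div r) - int (q div r))" by (rule blk)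
    then have "e = int (v div r) - int (q div r)" using P(4) e r0 by simp
    moreover have "int (p c) dvd int (v div r) - int (q div r)"
      using Xc_cong[OF P(2)] P(1) \<open>v mod r = q mod r\<close> P(3) by simp
    ultimately have "int (r * p c) dvd \<delta>" using e by simp
    then show False using nd \<delta>_def by simp
  qed
  have "\<forall>f1\<in>Sl n l c. \<forall>f2\<in>Sl n l c. f1 = f2"
  proof (intro ballI)
    fix f1 f2 assume f1: "f1 \<in> Sl n l c" and f2: "f2 \<in> Sl n l c"
    define q1 where "q1 = n0 - f1"
    define v1 where "v1 = n - l - f1"
    define q2 where "q2 = n0 - f2"
    define v2 where "v2 = n - l - f2"
    have P1: "Xc (q1 mod r) (1 + q1 div r) = 1" "Xc c (1 + v1 div r) = 1" "v1 mod r = c" "int v1 = int q1 + \<delta>"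
      using props[OF f1 q1_def v1_def] by auto
    have P2: "Xc (q2 mod r) (1 + q2 div r) = 1" "Xc c (1 + v2 div r) = 1" "v2 mod r = c" "int v2 = int q2 + \<delta>"
      using props[OF f2 q2_def v2_def] by auto
    have vv: "int v1 - int v2 = int r * (int (v1 div r) - int (v2 div r))" using P1(3) P2(3) by (intro blk) simp
    have "int r dvd int q1 - int q2" using vv P1(4) P2(4) by (metis add_diff_cancel_right dvd_triv_left)
    then have qm: "q1 mod r = q2 mod r" by (simp add: mod_int_iff)
    have qq: "int q1 - int q2 = int r * (int (q1 div r) - int (q2 div r))" by (rule blk[OF qm])
    define D where "D = int (q1 div r) - int (q2 div r)"
    have DD: "D = int (v1 div r) - int (v2 div r)" using vv qq P1(4) P2(4) r0 D_def by simp
    define cs where "cs = q1 mod r"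
    have cs: "cs < r" using r0 by (simp add: cs_def)
    have csc: "cs \<noteq> c"
    proof
      assume "cs = c"
      then have "v1 mod r = q1 mod r" using P1(3) cs_def by simp
      then have "int r dvd int v1 - int q1" by (simp add: mod_int_iff)
      then show False using nr[OF f1] P1(4) by simp
    qed
    have d1: "int (p cs) dvd D" using Xc_cong[OF P1(1)] P2(1) qm by (simp add: D_def cs_def)
    have d2: "int (p c) dvd D" using Xc_cong[OF P1(2) P2(2)] DD by simp
    have cop: "coprime (int (p cs)) (int (p c))"
      using primes_coprime[OF p_prime[OF cs] p_prime[OF c]] p_inj[OF cs c] csc by (auto simp: coprime_int_iff)
    have d12: "int (p cs) * int (p c) dvd D" using divides_mult[OF d1 d2 cop] .
    have fb: "f1 \<le> h" "1 \<le> f1" "f2 \<le> h" "1 \<le> f2" using Sl_pos n l f1 f2 by (auto simp: Sl_def)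
    have "\<bar>int q1 - int q2\<bar> < int h" using fb h_le_n0 unfolding q1_def q2_def by (auto simp: of_nat_diff)
    then have "\<bar>int r * D\<bar> < int r * int k" using qq D_def by (simp add: hh_def)
    then have "\<bar>D\<bar> < int k" using r0 by (simp add: abs_mult)
    also have "int k < int (p cs) * int (p c)" using pp_gt[OF cs c csc] by (simp add: of_nat_mult[symmetric] del: of_nat_mult)
    finally have "\<bar>D\<bar> < int (p cs) * int (p c)" .
    then have "D = 0"
    proof (rule contrapos_pp)
      assume "D \<noteq> 0"
      then have "\<bar>int (p cs) * int (p c)\<bar> \<le> \<bar>D\<bar>" using dvd_imp_le_int d12 by blast
      then show "\<not> \<bar>D\<bar> < int (p cs) * int (p c)" by simp
    qed
    then have "q1 = q2" using qq D_def by simp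
    then show "f1 = f2" using fb h_le_n0 unfolding q1_def q2_def by linarith
  qed
  moreover have "finite (Sl n l c)" by (auto simp: Sl_def intro: finite_subset[OF _ Bs_fin])
  ultimately show ?thesis by (metis One_nat_def card_le_Suc0_iff_eq)
qed

lemma E_le1:
  assumes l0: "l0 \<le> d" and n: "h \<le> n"
  shows "card {f \<in> {1..h}. (f \<le> l0 \<or> h - d + l0 < f) \<and> (n - f) mod r = c} \<le> 1"
proof -
  define E where "E = {f \<in> {1..h}. (f \<le> l0 \<or> h - d + l0 < f) \<and> (n - f) mod r = c}"
  have W: False if f: "f1 \<in> E" "f2 \<in> E" "f1 < f2" for f1 f2
  proof -
    have f1: "1 \<le> f1" "f1 \<le> h" "f1 \<le> l0 \<or> h - d + l0 < f1" "(n - f1) mod r = c" using f(1) by (auto simp: E_def)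
    have f2: "1 \<le> f2" "f2 \<le> h" "f2 \<le> l0 \<or> h - d + l0 < f2" "(n - f2) mod r = c" using f(2) by (auto simp: E_def)
    have "(n - f1) mod r = (n - f2) mod r" using f1(4) f2(4) by simp
    then have "int r dvd int (n - f1) - int (n - f2)" by (simp only: mod_int_iff)
    moreover have "int (n - f1) - int (n - f2) = int (f2 - f1)" using f(3) f1 f2 n by (simp add: of_nat_diff)
    ultimately have "r dvd f2 - f1" by (simp add: int_dvd_int_iff)
    then obtain s where s: "f2 - f1 = r * s" by blast
    have "s \<ge> 1" using s f(3) by (cases s) auto
    then have rs: "r \<le> f2 - f1" using s by simp
    have dr: "d < r" using d_lt .
    show False
    proof (cases "f2 \<le> l0")
      case True then show ?thesis using rs f(3) l0 dr by linarith
    next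
      case F2: False
      then have f2b: "h - d + l0 < f2" using f2(3) by simp
      show ?thesis
      proof (cases "f1 \<le> l0")
        case True
        have "r * (k - 1) < r * s" using s f2b True f2(2) dr h_ge_r by (simp add: hh_def diff_mult_distrib2)
        moreover have "r * s < r * k" using s f1(1) f2(2) f(3) unfolding hh_def by linarith
        ultimately have "k - 1 < s" "s < k" by simp_all
        then show False by linarith
      next
        case False
        then have "h - d + l0 < f1" using f1(3) by simp
        then show False using rs f2(2) dr f(3) h_ge_r by linarith
      qed
    qed
  qed
  have "\<forall>f1\<in>E. \<forall>f2\<in>E. f1 = f2"
  proof (intro ballI)
    fix x y assume "x \<in> E" "y \<in> E"
    then show "x = y" using W[of x y] W[of y x] by (meson linorder_neqE_nat)
  qed
  moreover have "finite E" by (simp add: E_def)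
  ultimately have "card E \<le> 1" by (metis One_nat_def card_le_Suc0_iff_eq)
  then show ?thesis by (simp add: E_def)
qed

lemma Dc_aligned:
  assumes n: "h \<le> n" and l0: "l0 \<le> d" and c: "c < r"
    and e: "int n - int l0 - int n0 = int r * e" and pe: "int (p c) dvd e"
  shows "card (Dc n c) \<le> card (Bc c) + 1"
proof -
  define E where "E = {f \<in> {1..h}. (f \<le> l0 \<or> h - d + l0 < f) \<and> (n - f) mod r = c}"
  have sub: "Dc n c \<subseteq> (\<lambda>f. l0 + f) ` Bc c \<union> E"
  proof
    fix x assume x: "x \<in> Dc n c"
    have xA: "x \<in> {1..h}" using x AA_sub by (auto simp: Dc_def Dset_def)
    have Z: "Zc (n - x) = 1" "(n - x) mod r = c" using x by (auto simp: Dc_def Dset_def)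
    show "x \<in> (\<lambda>f. l0 + f) ` Bc c \<union> E"
    proof (cases "x \<le> l0 \<or> h - d + l0 < x")
      case True then show ?thesis using xA Z by (simp add: E_def)
    next
      case False
      define f' where "f' = x - l0"
      have fb: "1 \<le> f'" "f' \<le> h - d" using False by (auto simp: f'_def)
      define v where "v = n - x"
      define q where "q = n0 - f'"
      have iv: "int v = int q + int r * e"
        using e xA n h_le_n0 fb False unfolding v_def q_def f'_def by (simp add: of_nat_diff)
      have vm: "v mod r = q mod r" using iv by (simp add: mod_int_iff)
      have b: "int v - int q = int r * (int (v div r) - int (q div r))" by (rule blk[OF vm])
      then have "int (v div r) - int (q div r) = e" using iv r0 by simp
      then have qv: "int (q div r) = int (v div r) + (- e)" by simp
      have "Xc c (1 + v div r) = 1" using Zc_one[OF Z(1)] Z(2) unfolding v_def by simp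
      then have "Xc c (1 + q div r) = 1" using Xc_shift[OF _ _ qv] pe by simp
      then have "Yc q = 1" "q mod r = c" using vm Z(2) unfolding Yc_def v_def by simp_all
      then have "f' \<in> Bc c" using fb unfolding Bc_def Bs_def q_def by simp
      moreover have "x = l0 + f'" using False by (simp add: f'_def)
      ultimately show ?thesis by blast
    qed
  qed
  have finB: "finite (Bc c)" using Bs_fin by (simp add: Bc_def)
  have "card (Dc n c) \<le> card ((\<lambda>f. l0 + f) ` Bc c \<union> E)"
    by (rule card_mono[OF _ sub]) (simp add: finB E_def)
  also have "\<dots> \<le> card ((\<lambda>f. l0 + f) ` Bc c) + card E" by (rule card_Un_le)
  also have "\<dots> \<le> card (Bc c) + 1" using card_image_le[OF finB, of "\<lambda>f. l0 + f"] E_le1[OF l0 n, of c]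
    by (simp add: E_def)
  finally show ?thesis .
qed

lemma free_bound:
  assumes n: "h \<le> n" and c: "c < r" and nd: "\<forall>l\<le>d. \<not> int (r * p c) dvd (int n - int l - int n0)"
  shows "card (Dc n c) + r \<le> card (Bc c)"
proof -
  have "card (Dc n c) \<le> (\<Sum>l\<in>{0..d}. card (Sl n l c))" by (rule Dc_union)
  also have "\<dots> \<le> (\<Sum>l\<in>{0..d}. 1)" by (rule sum_mono) (use Sl_le1[OF n _ c] nd in auto)
  also have "\<dots> = d + 1" by simp
  finally show ?thesis using Bc_ge[OF c] d_lt by linarith
qed

lemma sum_combine:
  assumes "cs < r" "card (Dc n cs) + r \<le> card (Bc cs)" "\<And>c. c < r \<Longrightarrow> card (Dc n c) \<le> card (Bc c) + 1"
  shows "card (Dset n) + 1 \<le> card Bs"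
proof -
  have fin: "finite {..<r}" by simp
  have "(\<Sum>c\<in>{..<r}-{cs}. card (Dc n c)) \<le> (\<Sum>c\<in>{..<r}-{cs}. card (Bc c) + 1)"
    by (rule sum_mono) (use assms(3) in auto)
  also have "\<dots> = (\<Sum>c\<in>{..<r}-{cs}. card (Bc c)) + (\<Sum>c\<in>{..<r}-{cs}. 1)" by (rule sum.distrib)
  also have "(\<Sum>c\<in>{..<r}-{cs}. (1::nat)) = card ({..<r}-{cs})" by simp
  also have "card ({..<r}-{cs}) = r - 1" using assms(1) by simp
  finally have rest: "(\<Sum>c\<in>{..<r}-{cs}. card (Dc n c)) \<le> (\<Sum>c\<in>{..<r}-{cs}. card (Bc c)) + (r - 1)" .
  have "card (Dset n) = card (Dc n cs) + (\<Sum>c\<in>{..<r}-{cs}. card (Dc n c))"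
    unfolding card_Dset using assms(1) by (simp add: sum.remove)
  moreover have "card Bs = card (Bc cs) + (\<Sum>c\<in>{..<r}-{cs}. card (Bc c))"
    unfolding card_Bs using assms(1) by (simp add: sum.remove)
  ultimately show ?thesis using rest assms(2) r0 by linarith
qed

lemma int_dvd_small: "int r dvd x \<Longrightarrow> x \<noteq> 0 \<Longrightarrow> \<bar>x\<bar> < int r \<Longrightarrow> False"
  using dvd_imp_le_int by force

lemma fire_card:
  assumes n: "h \<le> n" and Z: "Zc n = 1"
  shows "card (Dset n) + 1 \<le> card Bs"
proof (cases "\<exists>l0\<le>d. int r dvd (int n - int l0 - int n0)")
  case False
  have "\<forall>l\<le>d. \<not> int (r * p 0) dvd (int n - int l - int n0)"
    using False by (metis dvd_mult_left of_nat_mult)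
  then have b0: "card (Dc n 0) + r \<le> card (Bc 0)" using free_bound[OF n r0] by simp
  have "card (Dc n c) \<le> card (Bc c) + 1" if c: "c < r" for c
  proof -
    have "\<forall>l\<le>d. \<not> int (r * p c) dvd (int n - int l - int n0)"
      using False by (metis dvd_mult_left of_nat_mult)
    then show ?thesis using free_bound[OF n c] by simp
  qed
  then show ?thesis using sum_combine[OF r0 b0] by blast
next
  case True
  then obtain l0 where l0: "l0 \<le> d" "int r dvd (int n - int l0 - int n0)" by blast
  then obtain e where e: "int n - int l0 - int n0 = int r * e" by blast
  have other: "\<not> int r dvd (int n - int l - int n0)" if l: "l \<le> d" "l \<noteq> l0" for l
  proof
    assume "int r dvd (int n - int l - int n0)"
    then have "int r dvd (int n - int l - int n0) - (int n - int l0 - int n0)" using l0(2) by (rule dvd_diff)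
    moreover have "(int n - int l - int n0) - (int n - int l0 - int n0) = int l0 - int l" by simp
    moreover have "int l0 - int l \<noteq> 0" "\<bar>int l0 - int l\<bar> < int r" using l l0(1) d_lt by auto
    ultimately show False using int_dvd_small[of "int l0 - int l"] by simp
  qed
  define X where "X = int (L + k - 1) + e"
  have n0i: "int n0 = int r * int (L + k - 1)" by (simp add: n0_def)
  have nX: "int n = int l0 + int r * X" using e n0i by (simp add: X_def algebra_simps)
  have l0r: "l0 < r" using l0(1) d_lt by simp
  have nm: "n mod r = l0"
  proof -
    have "int n mod int r = int l0 mod int r" using nX by simp
    then show ?thesis using l0r by (metis of_nat_eq_iff of_nat_mod mod_less)
  qed
  have nd: "int (n div r) = X"
  proof -
    have "int n div int r = int l0 div int r + X" using nX r0 by simp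
    then show ?thesis using l0r by (simp add: zdiv_int[symmetric] div_pos_pos_trivial)
  qed
  have "n div r \<le> L + k - 2" using Z nm l0(1) by (auto simp: Zc_def split: if_splits)
  then have e1: "e \<le> -1" using nd L_pos k_ge unfolding X_def by linarith
  have "k \<le> n div r" using n r0 by (simp add: hh_def less_eq_div_iff_mult_less_eq mult.commute)
  then have e2: "1 - int L \<le> e" using nd L_pos k_ge unfolding X_def by linarith
  obtain cs where cs: "cs \<le> d" "\<not> int (p cs) dvd e"
  proof (rule ccontr)
    assume "\<not> thesis"
    then have all: "\<forall>c\<le>d. int (p c) dvd e" using that by blast
    have "L dvd nat \<bar>e\<bar>"
    proof (rule Lcm_least)
      fix b assume "b \<in> pr m ` {0..d}"
      then obtain c where "c \<le> d" "b = p c" by auto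
      then have "int b dvd \<bar>e\<bar>" using all by simp
      also have "\<bar>e\<bar> = int (nat \<bar>e\<bar>)" by simp
      finally show "b dvd nat \<bar>e\<bar>" by (simp only: int_dvd_int_iff)
    qed
    moreover have "nat \<bar>e\<bar> > 0" using e1 by simp
    ultimately have "L \<le> nat \<bar>e\<bar>" by (rule dvd_imp_le)
    then show False using e1 e2 by linarith
  qed
  have csr: "cs < r" using cs(1) d_lt by simp
  have freec: "\<forall>l\<le>d. \<not> int (r * p c) dvd (int n - int l - int n0)" if c: "\<not> int (p c) dvd e" for c
  proof (intro allI impI)
    fix l assume l: "l \<le> d"
    show "\<not> int (r * p c) dvd (int n - int l - int n0)"
    proof (cases "l = l0")
      case True
      show ?thesis
      proof
        assume "int (r * p c) dvd (int n - int l - int n0)"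
        then have "int r * int (p c) dvd int r * e" using e True by simp
        then have "int (p c) dvd e" using r0 by (simp add: mult_dvd_mono)
        then show False using c by simp
      qed
    next
      case False
      then show ?thesis using other[OF l False] by (metis dvd_mult_left of_nat_mult)
    qed
  qed
  have bcs: "card (Dc n cs) + r \<le> card (Bc cs)" using free_bound[OF n csr freec[OF cs(2)]] .
  have "card (Dc n c) \<le> card (Bc c) + 1" if c: "c < r" for c
  proof (cases "int (p c) dvd e")
    case True
    then show ?thesis using Dc_aligned[OF n l0(1) c e] by simp
  next
    case False
    then show ?thesis using free_bound[OF n c freec[OF False]] by simp
  qed
  then show ?thesis using sum_combine[OF csr bcs] by blast
qed

lemma Tot_eq: "Tot m d = card Bs" by (simp add: Tot_def B0_eq)

lemma Bs_ge1: "1 \<le> card Bs"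
proof -
  have "Bc 0 \<subseteq> Bs" by (auto simp: Bc_def)
  then have "card (Bc 0) \<le> card Bs" using Bs_fin by (rule card_mono[rotated])
  then show ?thesis using Bc_ge[OF r0] r0 by linarith
qed

lemma cc_sum:
  "(\<Sum>f = 1..h. cc lam m d f * Zc (n - f)) = (\<Sum>f = 1..h. bb m f * Zc (n - f)) + betad lam m d * real (card (Dset n))"
proof -
  have "(\<Sum>f = 1..h. cc lam m d f * Zc (n - f)) = (\<Sum>f = 1..h. bb m f * Zc (n - f) + betad lam m d * (if f \<in> AA m d then Zc (n - f) else 0))"
    by (rule sum.cong) (auto simp: cc_def algebra_simps)
  also have "\<dots> = (\<Sum>f = 1..h. bb m f * Zc (n - f)) + betad lam m d * (\<Sum>f = 1..h. if f \<in> AA m d then Zc (n - f) else 0)"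
    by (simp add: sum.distrib sum_distrib_left)
  also have "(\<Sum>f = 1..h. if f \<in> AA m d then Zc (n - f) else 0) = (\<Sum>f\<in>AA m d. Zc (n - f))"
  proof -
    have "(\<Sum>f = 1..h. if f \<in> AA m d then Zc (n - f) else 0) = (\<Sum>f\<in>{f\<in>{1..h}. f \<in> AA m d}. Zc (n - f))"
      using sum.inter_filter[of "{1..h}" "\<lambda>f. Zc (n - f)" "\<lambda>f. f \<in> AA m d"] by simp
    also have "{f\<in>{1..h}. f \<in> AA m d} = AA m d" using AA_sub by auto
    finally show ?thesis .
  qed
  also have "(\<Sum>f\<in>AA m d. Zc (n - f)) = real (card (Dset n))"
  proof -
    have "(\<Sum>f\<in>AA m d. Zc (n - f)) = (\<Sum>f\<in>AA m d. if Zc (n - f) = 1 then 1 else 0)"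
      by (rule sum.cong) (use Zc_01 in auto)
    also have "\<dots> = real (card {f\<in>AA m d. Zc (n - f) = 1})"
      using sum.inter_filter[of "AA m d" "\<lambda>f. 1::real" "\<lambda>f. Zc (n - f) = 1", OF AA_fin] by simp
    finally show ?thesis by (simp add: Dset_def)
  qed
  finally show ?thesis .
qed

lemma ineqs:
  fixes T N lam :: real
  assumes T: "T \<ge> 1" and l1: "-1 \<le> lam" and l0: "lam < 0" and N0: "0 \<le> N"
  shows "lam - (lam / T) / 8 > -1"
    and "N \<le> T - 1 \<Longrightarrow> (lam / T) * N - (lam - (lam / T) / 8) \<ge> 0"
    and "T \<le> N \<Longrightarrow> (lam / T) * N - (lam - (lam / T) / 8) < 0"
    and "(lam / T) * N \<le> 0"
proof -
  define b where "b = lam / T"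
  have Tp: "T > 0" using T by simp
  have bT: "b * T = lam" using Tp by (simp add: b_def)
  have bneg: "b < 0" using Tp l0 by (simp add: b_def divide_neg_pos)
  have "lam * T \<le> lam * 1" using T l0 by (intro mult_left_mono_neg) auto
  then have "lam \<le> b" using Tp by (simp add: b_def le_divide_eq)
  then show "lam - (lam / T) / 8 > -1" using bneg l1 unfolding b_def[symmetric] by linarith
  show "N \<le> T - 1 \<Longrightarrow> (lam / T) * N - (lam - (lam / T) / 8) \<ge> 0"
  proof -
    assume N: "N \<le> T - 1"
    have "b * (T - 1) \<le> b * N" using N bneg by (intro mult_left_mono_neg) auto
    moreover have "b * (T - 1) = lam - b" using bT by (simp add: right_diff_distrib)
    ultimately show ?thesis unfolding b_def[symmetric] using bneg by linarith
  qed
  show "T \<le> N \<Longrightarrow> (lam / T) * N - (lam - (lam / T) / 8) < 0"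
  proof -
    assume N: "T \<le> N"
    have "b * N \<le> b * T" using N bneg by (intro mult_left_mono_neg) auto
    then show ?thesis unfolding b_def[symmetric] using bT bneg by linarith
  qed
  show "(lam / T) * N \<le> 0" using bneg N0 unfolding b_def[symmetric] by (simp add: mult_nonpos_nonneg)
qed

lemma zs_eq:
  assumes l1: "-1 \<le> lam" and l0: "lam < 0"
  shows "zs lam m d n = Zc n"
  unfolding zs_def
proof (rule thr_seq_eq)
  fix n assume n: "n < h"
  have "n div r < k" using n r0 by (simp add: hh_def less_mult_imp_div_less mult.commute)
  then have "n div r \<le> L + k - 2" using L_pos by linarith
  then show "ys m n = Zc n" using ys_eq Zc_Yc by simp
next
  fix n assume n: "h \<le> n"
  define T where "T = real (card Bs)"
  define N where "N = real (card (Dset n))"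
  have T1: "T \<ge> 1" using Bs_ge1 by (simp add: T_def)
  have N0: "0 \<le> N" by (simp add: N_def)
  have bet: "betad lam m d = lam / T" by (simp add: betad_def Tot_eq T_def)
  have th2: "theta2 lam m d = 2 * real r + (lam - (lam / T) / 8)"
    by (simp add: theta2_def xi_def bet theta_eq)
  note I = ineqs[OF T1 l1 l0 N0]
  have kn: "k \<le> n div r" using n r0 by (simp add: hh_def less_eq_div_iff_mult_less_eq mult.commute)
  have i: "n mod r < r" using r0 by simp
  have cs: "(\<Sum>f = 1..h. bb m f * Zc (n - f)) = CS (\<lambda>s. Zc (r*s + n mod r)) (n div r)"
    by (rule chan_sum[OF n])
  define S where "S = CS (\<lambda>s. Zc (r*s + n mod r)) (n div r)"
  have sum: "(\<Sum>f = 1..h. cc lam m d f * Zc (n - f)) - theta2 lam m d = (S - 2 * real r) + ((lam / T) * N - (lam - (lam / T) / 8))"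
    unfolding cc_sum cs th2 S_def bet N_def by simp
  have zero: "step ((\<Sum>f = 1..h. cc lam m d f * Zc (n - f)) - theta2 lam m d) = 0" if "S \<le> 2 * real r - 1"
    using that I(1) I(4) unfolding sum by (intro step_lt) linarith
  have fire: "step ((\<Sum>f = 1..h. cc lam m d f * Zc (n - f)) - theta2 lam m d) = 1" if "S = 2 * real r" "Zc n = 1"
  proof -
    have "card (Dset n) + 1 \<le> card Bs" using fire_card[OF n that(2)] .
    then have "N \<le> T - 1" unfolding N_def T_def by linarith
    then show ?thesis using I(2) that(1) unfolding sum by (intro step_ge) linarith
  qed
  define P where "P = (\<lambda>s. (if (s + 1) mod p (n mod r) = k mod p (n mod r) then 1 else 0) :: real)"
  have per_case: "step ((\<Sum>f = 1..h. cc lam m d f * Zc (n - f)) - theta2 lam m d) = Zc n"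
    if SP: "S = CS P (n div r)" and Zn: "Zc n = Xc (n mod r) (1 + n div r)"
  proof (cases "(n div r + 1) mod p (n mod r) = k mod p (n mod r)")
    case True
    then have "S = 2 * real r" using CS_periodic(1)[OF i _ kn, of P 1] SP by (simp add: P_def)
    moreover have "Zc n = 1" using Zn True by (simp add: Xc_def add.commute)
    ultimately show ?thesis using fire by simp
  next
    case False
    then have "S \<le> 2 * real r - 2" using CS_periodic(2)[OF i _ kn, of P 1] SP by (simp add: P_def)
    moreover have "Zc n = 0" using Zn False by (simp add: Xc_def add.commute)
    ultimately show ?thesis using zero by simp
  qed
  show "step ((\<Sum>f = 1..h. cc lam m d f * Zc (n - f)) - theta2 lam m d) = Zc n"
  proof (cases "n mod r \<le> d")
    case False
    have "(\<lambda>s. Zc (r*s + n mod r)) = P" using False i by (auto simp: Zc_def Xc_def P_def add.commute)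
    then show ?thesis using per_case False by (simp add: S_def Zc_def)
  next
    case True
    define K where "K = L + k - 2"
    have kil: "\<And>s. (\<lambda>s. Zc (r*s + n mod r)) s = (if (s + 1) mod p (n mod r) = k mod p (n mod r) \<and> s \<le> K then 1 else 0)"
      using True i by (auto simp: Zc_def Xc_def K_def add.commute)
    have Pd: "\<And>s. P s = (if (s + 1) mod p (n mod r) = k mod p (n mod r) then 1 else 0)" by (simp add: P_def)
    have KK: "K + 1 + 1 = L + k" using k_ge L_pos by (simp add: K_def)
    have Lk: "(L + k) mod p (n mod r) = k mod p (n mod r)"
    proof -
      obtain c where "L = p (n mod r) * c" using dvd_L[OF True] by blast
      then show ?thesis by simp
    qed
    show ?thesis
    proof (cases "n div r \<le> K + 1")
      case low: True
      have SP: "S = CS P (n div r)" unfolding S_def by (rule CS_low[OF kil Pd low])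
      show ?thesis
      proof (cases "n div r \<le> K")
        case True
        then have "Zc n = Xc (n mod r) (1 + n div r)" by (simp add: Zc_def K_def)
        then show ?thesis using per_case SP by simp
      next
        case False
        then have j: "n div r = K + 1" using low by simp
        then have "(n div r + 1) mod p (n mod r) = k mod p (n mod r)" using KK Lk by simp
        then have S2: "S = 2 * real r" using CS_periodic(1)[OF i Pd kn] SP by simp
        have Zn: "Zc n = 0" using True j by (simp add: Zc_def K_def)
        have nn: "n = n0 + n mod r"
        proof -
          have "n div r = L + k - 1" using j KK by linarith
          then have "r * (n div r) = n0" by (simp add: n0_def)
          moreover have "n = r * (n div r) + n mod r" by simp
          ultimately show ?thesis by simp
        qed
        have "card Bs \<le> card (Dset n)" using kill_card[OF True] nn by simp
        then have "T \<le> N" unfolding T_def N_def by simp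
        then have "step ((\<Sum>f = 1..h. cc lam m d f * Zc (n - f)) - theta2 lam m d) = 0"
          using I(3) S2 unfolding sum by (intro step_lt) linarith
        then show ?thesis using Zn by simp
      qed
    next
      case high: False
      have "S \<le> 2 * real r - 1" unfolding S_def
        by (rule CS_killed[OF i kil kn]) (use KK Lk high in simp_all)
      moreover have "Zc n = 0" using True high by (simp add: Zc_def K_def)
      ultimately show ?thesis using zero by simp
    qed
  qed
qed

lemma Zc_shift: "Zc (r * L + n) = Wc n"
proof -
  have dm: "(r * L + n) mod r = n mod r" "(r * L + n) div r = L + n div r" using r0 by simp_all
  show ?thesis
  proof (cases "n mod r \<le> d")
    case True
    have "Xc (n mod r) (1 + (L + n div r)) = Xc (n mod r) (1 + n div r)"
      using Xc_per[OF True, of "1 + n div r"] by (simp add: add.commute add.left_commute)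
    moreover have "(L + k - 2 < L + n div r) = (\<not> n div r \<le> k - 2)" using k_ge by linarith
    ultimately show ?thesis using True unfolding Zc_def Wc_def dm by simp
  next
    case False
    then show ?thesis unfolding Zc_def Wc_def dm by (simp add: add.commute add.left_commute)
  qed
qed

end

theorem lemma20:
  fixes m d t :: nat and lam :: real
  assumes "m > 0" and "rho m \<ge> 2"
    and "-1 \<le> lam" and "lam < 0"
    and "d \<le> rho m - 1"
    and "t \<le> rho m * (kk m - 1 - pr m d) + d"
  shows "zs lam m d (L1 m d + hh m + t) = ws m d (hh m + t)"
proof -
  interpret L20d m d
    by unfold_locales (use assms in auto)
  show ?thesis
    using zs_eq[OF assms(3,4)] ws_eq Zc_shift[of "hh m + t"] L1_eq by (simp add: add.assoc)
qed

end
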